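(* For every finite multiset $\Gamma$ and formulas $\varphi,\chi$: if $\varphi,\varphi,\Gamma\Rightarrow\chi$ is provable in $\mathsf{G4iSLt}$, then $\varphi,\Gamma\Rightarrow\chi$ is provable in $\mathsf{G4iSLt}$.
   Context: Formulas are built by the grammar $\varphi ::= p \mid \bot \mid \varphi\land\varphi \mid \varphi\lor\varphi \mid \varphi\to\varphi \mid \Box\varphi$, with $p$ ranging over a countably infinite set of propositional variables. For a multiset $\Gamma$, $\Box\Gamma=\{\Box\psi:\psi\in\Gamma\}$; a boxed formula is one of the form $\Box\psi$. A sequent is $\Gamma\Rightarrow\chi$ with $\Gamma$ a finite multiset of formulas and $\chi$ a formula. The sequent calculus $\mathsf{G4iSLt}$ has the following rules, where $p$ is a propositional variable and $\Phi$ always denotes a multiset containing no boxed formula: (⊥L) $\bot,\Gamma\Rightarrow\chi$ (no premise); (IdP) $\Gamma,p\Rightarrow p$ (no premise); (∧L) from $\Gamma,\varphi,\psi\Rightarrow\chi$ infer $\Gamma,\varphi\land\psi\Rightarrow\chi$; (∧R) from $\Gamma\Rightarrow\varphi$ and $\Gamma\Rightarrow\psi$ infer $\Gamma\Rightarrow\varphi\land\psi$; (∨L) from $\Gamma,\varphi\Rightarrow\chi$ and $\Gamma,\psi\Rightarrow\chi$ infer $\Gamma,\varphi\lor\psi\Rightarrow\chi$; (∨R$_i$), $i\in\{1,2\}$: from $\Gamma\Rightarrow\varphi_i$ infer $\Gamma\Rightarrow\varphi_1\lor\varphi_2$; (p→L) from $\Gamma,p,\varphi\Rightarrow\chi$ infer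 $\Gamma,p,p\to\varphi\Rightarrow\chi$; (→R) from $\Gamma,\varphi\Rightarrow\psi$ infer $\Gamma\Rightarrow\varphi\to\psi$; (□→L) from $\Phi,\Gamma,\psi,\Box\varphi\Rightarrow\varphi$ and $\Phi,\Box\Gamma,\psi\Rightarrow\chi$ infer $\Phi,\Box\Gamma,\Box\varphi\to\psi\Rightarrow\chi$; (SLtR) from $\Phi,\Gamma,\Box\varphi\Rightarrow\varphi$ infer $\Phi,\Box\Gamma\Rightarrow\Box\varphi$; (∧→L) from $\Gamma,\varphi\to(\psi\to\chi)\Rightarrow\delta$ infer $\Gamma,(\varphi\land\psi)\to\chi\Rightarrow\delta$; (∨→L) from $\Gamma,\varphi\to\chi,\psi\to\chi\Rightarrow\delta$ infer $\Gamma,(\varphi\lor\psi)\to\chi\Rightarrow\delta$; (→→L) from $\Gamma,\psi\to\chi\Rightarrow\varphi\to\psi$ and $\Gamma,\chi\Rightarrow\delta$ infer $\Gamma,(\varphi\to\psi)\to\chi\Rightarrow\delta$. A proof of a sequent $S$ is a finite tree of sequents with root $S$ in which each interior node together with its children forms an instance of a rule (conclusion, premises) and each leaf is the conclusion of a premise-free rule; $S$ is provable if it has a proof. *)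

theory Defs
  imports Main "HOL-Library.Multiset"
begin

datatype form =
    Var nat
  | Bot
  | And form form
  | Or form form
  | Imp form form
  | Box form

definition is_boxed :: "form \<Rightarrow> bool" where
  "is_boxed A \<longleftrightarrow> (\<exists>B. A = Box B)"

definition no_boxed :: "form multiset \<Rightarrow> bool" where
  "no_boxed \<Phi> \<longleftrightarrow> (\<forall>A \<in># \<Phi>. \<not> is_boxed A)"

definition boxms :: "form multiset \<Rightarrow> form multiset" where
  "boxms \<Gamma> = image_mset Box \<Gamma>"

inductive G4iSLt :: "form multiset \<Rightarrow> form \<Rightarrow> bool" where
  BotL: "G4iSLt (add_mset Bot \<Gamma>) C"
| IdP: "G4iSLt (add_mset (Var p) \<Gamma>) (Var p)"
| AndL: "G4iSLt (add_mset A (add_mset B \<Gamma>)) C \<Longrightarrow> G4iSLt (add_mset (And A B) \<Gamma>) C"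
| AndR: "G4iSLt \<Gamma> A \<Longrightarrow> G4iSLt \<Gamma> B \<Longrightarrow> G4iSLt \<Gamma> (And A B)"
| OrL: "G4iSLt (add_mset A \<Gamma>) C \<Longrightarrow> G4iSLt (add_mset B \<Gamma>) C \<Longrightarrow> G4iSLt (add_mset (Or A B) \<Gamma>) C"
| OrR1: "G4iSLt \<Gamma> A \<Longrightarrow> G4iSLt \<Gamma> (Or A B)"
| OrR2: "G4iSLt \<Gamma> B \<Longrightarrow> G4iSLt \<Gamma> (Or A B)"
| PImpL: "G4iSLt (add_mset (Var p) (add_mset A \<Gamma>)) C \<Longrightarrow>
          G4iSLt (add_mset (Var p) (add_mset (Imp (Var p) A) \<Gamma>)) C"
| ImpR: "G4iSLt (add_mset A \<Gamma>) B \<Longrightarrow> G4iSLt \<Gamma> (Imp A B)"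
| BoxImpL: "no_boxed \<Phi> \<Longrightarrow>
            G4iSLt (\<Phi> + \<Gamma> + {#B, Box A#}) A \<Longrightarrow>
            G4iSLt (\<Phi> + boxms \<Gamma> + {#B#}) C \<Longrightarrow>
            G4iSLt (\<Phi> + boxms \<Gamma> + {#Imp (Box A) B#}) C"
| SLtR: "no_boxed \<Phi> \<Longrightarrow>
         G4iSLt (\<Phi> + \<Gamma> + {#Box A#}) A \<Longrightarrow>
         G4iSLt (\<Phi> + boxms \<Gamma>) (Box A)"
| AndImpL: "G4iSLt (add_mset (Imp A (Imp B C)) \<Gamma>) D \<Longrightarrow>
            G4iSLt (add_mset (Imp (And A B) C) \<Gamma>) D"
| OrImpL: "G4iSLt (add_mset (Imp A C) (add_mset (Imp B C) \<Gamma>)) D \<Longrightarrow>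
           G4iSLt (add_mset (Imp (Or A B) C) \<Gamma>) D"
| ImpImpL: "G4iSLt (add_mset (Imp B C) \<Gamma>) (Imp A B) \<Longrightarrow>
            G4iSLt (add_mset C \<Gamma>) D \<Longrightarrow>
            G4iSLt (add_mset (Imp (Imp A B) C) \<Gamma>) D"

end

theory Submission
  imports Defs
begin


fun unbx :: "form \<Rightarrow> form" where
  "unbx (Box A) = A" | "unbx A = A"

definition nb :: "form multiset \<Rightarrow> form multiset" where
  "nb M = filter_mset (\<lambda>A. \<not> is_boxed A) M"

definition db :: "form multiset \<Rightarrow> form multiset" where
  "db M = image_mset unbx (filter_mset is_boxed M)"

lemma isb_simps[simp]: "is_boxed (Box A)" "\<not> is_boxed (Var p)" "\<not> is_boxed Bot"
  "\<not> is_boxed (And A B)" "\<not> is_boxed (Or A B)" "\<not> is_boxed (Imp A B)"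
  by (auto simp: is_boxed_def)

lemma nb_empty[simp]: "nb {#} = {#}" and db_empty[simp]: "db {#} = {#}"
  by (auto simp: nb_def db_def)

lemma nb_add[simp]: "nb (add_mset x M) = (if is_boxed x then nb M else add_mset x (nb M))"
  by (auto simp: nb_def)
lemma db_add[simp]: "db (add_mset x M) = (if is_boxed x then add_mset (unbx x) (db M) else db M)"
  by (auto simp: db_def)
lemma nb_union[simp]: "nb (M + N) = nb M + nb N" by (auto simp: nb_def)
lemma db_union[simp]: "db (M + N) = db M + db N" by (auto simp: db_def)

lemma boxms_add[simp]: "boxms (add_mset x M) = add_mset (Box x) (boxms M)"
  and boxms_empty[simp]: "boxms {#} = {#}" and boxms_union[simp]: "boxms (M + N) = boxms M + boxms N"
  by (auto simp: boxms_def)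

lemma nb_boxms[simp]: "nb (boxms G) = {#}" by (induction G) auto
lemma db_boxms[simp]: "db (boxms G) = G" by (induction G) auto
lemma nb_nob: "no_boxed \<Phi> \<Longrightarrow> nb \<Phi> = \<Phi>" by (induction \<Phi>) (auto simp: no_boxed_def)
lemma db_nob: "no_boxed \<Phi> \<Longrightarrow> db \<Phi> = {#}" by (induction \<Phi>) (auto simp: no_boxed_def)
lemma nob_nb: "no_boxed (nb M)" by (auto simp: nb_def no_boxed_def)

lemma split_nb_db: "nb M + boxms (db M) = M"
proof (induction M)
  case (add x M) then show ?case
    by (cases x) (auto simp: is_boxed_def)
qed simp

inductive hg :: "nat \<Rightarrow> form multiset \<Rightarrow> form \<Rightarrow> bool" where
  hBotL: "hg n (add_mset Bot \<Gamma>) C"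
| hIdP: "hg n (add_mset (Var p) \<Gamma>) (Var p)"
| hAndL: "hg n (add_mset A (add_mset B \<Gamma>)) C \<Longrightarrow> hg (Suc n) (add_mset (And A B) \<Gamma>) C"
| hAndR: "hg n \<Gamma> A \<Longrightarrow> hg n \<Gamma> B \<Longrightarrow> hg (Suc n) \<Gamma> (And A B)"
| hOrL: "hg n (add_mset A \<Gamma>) C \<Longrightarrow> hg n (add_mset B \<Gamma>) C \<Longrightarrow> hg (Suc n) (add_mset (Or A B) \<Gamma>) C"
| hOrR1: "hg n \<Gamma> A \<Longrightarrow> hg (Suc n) \<Gamma> (Or A B)"
| hOrR2: "hg n \<Gamma> B \<Longrightarrow> hg (Suc n) \<Gamma> (Or A B)"
| hPImpL: "hg n (add_mset (Var p) (add_mset A \<Gamma>)) C \<Longrightarrow>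
          hg (Suc n) (add_mset (Var p) (add_mset (Imp (Var p) A) \<Gamma>)) C"
| hImpR: "hg n (add_mset A \<Gamma>) B \<Longrightarrow> hg (Suc n) \<Gamma> (Imp A B)"
| hBoxImpL: "hg n (add_mset B (add_mset (Box A) (nb \<Gamma> + db \<Gamma>))) A \<Longrightarrow>
            hg n (add_mset B \<Gamma>) C \<Longrightarrow>
            hg (Suc n) (add_mset (Imp (Box A) B) \<Gamma>) C"
| hSLtR: "hg n (add_mset (Box A) (nb \<Gamma> + db \<Gamma>)) A \<Longrightarrow> hg (Suc n) \<Gamma> (Box A)"
| hAndImpL: "hg n (add_mset (Imp A (Imp B C)) \<Gamma>) D \<Longrightarrow>
            hg (Suc n) (add_mset (Imp (And A B) C) \<Gamma>) D"
| hOrImpL: "hg n (add_mset (Imp A C) (add_mset (Imp B C) \<Gamma>)) D \<Longrightarrow>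
           hg (Suc n) (add_mset (Imp (Or A B) C) \<Gamma>) D"
| hImpImpL: "hg n (add_mset (Imp B C) \<Gamma>) (Imp A B) \<Longrightarrow>
            hg n (add_mset C \<Gamma>) D \<Longrightarrow>
            hg (Suc n) (add_mset (Imp (Imp A B) C) \<Gamma>) D"

lemma hg_mono: "hg n G C \<Longrightarrow> n \<le> m \<Longrightarrow> hg m G C"
proof (induction n G C arbitrary: m rule: hg.induct)
  case (hAndL n A B \<Gamma> C) then show ?case by (cases m) (auto intro: hg.intros)
next case (hAndR n \<Gamma> A B) then show ?case by (cases m) (auto intro: hg.intros)
next case (hOrL n A \<Gamma> C B) then show ?case by (cases m) (auto intro: hg.intros)
next case (hOrR1 n \<Gamma> A B) then show ?case by (cases m) (auto intro: hg.intros)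
next case (hOrR2 n \<Gamma> A B) then show ?case by (cases m) (auto intro: hg.intros)
next case (hPImpL n p A \<Gamma> C) then show ?case by (cases m) (auto intro: hg.intros)
next case (hImpR n A \<Gamma> B) then show ?case by (cases m) (auto intro: hg.intros)
next case (hBoxImpL n B A \<Gamma> C) then show ?case by (cases m) (auto intro: hg.intros)
next case (hSLtR n A \<Gamma>) then show ?case by (cases m) (auto intro: hg.intros)
next case (hAndImpL n A B C \<Gamma> D) then show ?case by (cases m) (auto intro: hg.intros)
next case (hOrImpL n A C B \<Gamma> D) then show ?case by (cases m) (auto intro: hg.intros)
next case (hImpImpL n B C \<Gamma> A D) then show ?case by (cases m) (auto intro: hg.intros)
qed (auto intro: hg.intros)

definition dv :: "form multiset \<Rightarrow> form \<Rightarrow> bool" where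
  "dv G C \<longleftrightarrow> (\<exists>n. hg n G C)"

lemma hd_dv: "hg n G C \<Longrightarrow> dv G C" by (auto simp: dv_def)

lemma dv2: "dv G1 C1 \<Longrightarrow> dv G2 C2 \<Longrightarrow> (\<And>n. hg n G1 C1 \<Longrightarrow> hg n G2 C2 \<Longrightarrow> P) \<Longrightarrow> P"
  unfolding dv_def by (metis hg_mono max.cobounded1 max.cobounded2)

lemma dBotL: "dv (add_mset Bot \<Gamma>) C" by (auto simp: dv_def intro: hg.intros)
lemma dIdP: "dv (add_mset (Var p) \<Gamma>) (Var p)" by (auto simp: dv_def intro: hg.intros)
lemma dAndL: "dv (add_mset A (add_mset B \<Gamma>)) C \<Longrightarrow> dv (add_mset (And A B) \<Gamma>) C"
  by (auto simp: dv_def intro: hg.intros)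
lemma dAndR: "dv \<Gamma> A \<Longrightarrow> dv \<Gamma> B \<Longrightarrow> dv \<Gamma> (And A B)"
  by (erule dv2, assumption) (auto simp: dv_def intro: hg.intros)
lemma dOrL: "dv (add_mset A \<Gamma>) C \<Longrightarrow> dv (add_mset B \<Gamma>) C \<Longrightarrow> dv (add_mset (Or A B) \<Gamma>) C"
  by (erule dv2, assumption) (auto simp: dv_def intro: hg.intros)
lemma dOrR1: "dv \<Gamma> A \<Longrightarrow> dv \<Gamma> (Or A B)" by (auto simp: dv_def intro: hg.intros)
lemma dOrR2: "dv \<Gamma> B \<Longrightarrow> dv \<Gamma> (Or A B)" by (auto simp: dv_def intro: hg.intros)
lemma dPImpL: "dv (add_mset (Var p) (add_mset A \<Gamma>)) C \<Longrightarrow>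
          dv (add_mset (Var p) (add_mset (Imp (Var p) A) \<Gamma>)) C"
  by (auto simp: dv_def intro: hg.intros)
lemma dImpR: "dv (add_mset A \<Gamma>) B \<Longrightarrow> dv \<Gamma> (Imp A B)" by (auto simp: dv_def intro: hg.intros)
lemma dBoxImpL: "dv (add_mset B (add_mset (Box A) (nb \<Gamma> + db \<Gamma>))) A \<Longrightarrow>
            dv (add_mset B \<Gamma>) C \<Longrightarrow> dv (add_mset (Imp (Box A) B) \<Gamma>) C"
  by (erule dv2, assumption) (auto simp: dv_def intro: hg.intros)
lemma dSLtR: "dv (add_mset (Box A) (nb \<Gamma> + db \<Gamma>)) A \<Longrightarrow> dv \<Gamma> (Box A)"
  by (auto simp: dv_def intro: hg.intros)
lemma dAndImpL: "dv (add_mset (Imp A (Imp B C)) \<Gamma>) D \<Longrightarrow> dv (add_mset (Imp (And A B) C) \<Gamma>) D"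
  by (auto simp: dv_def intro: hg.intros)
lemma dOrImpL: "dv (add_mset (Imp A C) (add_mset (Imp B C) \<Gamma>)) D \<Longrightarrow>
           dv (add_mset (Imp (Or A B) C) \<Gamma>) D"
  by (auto simp: dv_def intro: hg.intros)
lemma dImpImpL: "dv (add_mset (Imp B C) \<Gamma>) (Imp A B) \<Longrightarrow> dv (add_mset C \<Gamma>) D \<Longrightarrow>
            dv (add_mset (Imp (Imp A B) C) \<Gamma>) D"
  by (erule dv2, assumption) (auto simp: dv_def intro: hg.intros)

lemma G_dv: "G4iSLt G C \<Longrightarrow> dv G C"
proof (induction rule: G4iSLt.induct)
  case (BoxImpL \<Phi> \<Gamma> B A C)
  then show ?case using dBoxImpL[of B A "\<Phi> + boxms \<Gamma>" C]
    by (simp add: nb_nob db_nob add.commute add.left_commute)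
next
  case (SLtR \<Phi> \<Gamma> A)
  then show ?case using dSLtR[of A "\<Phi> + boxms \<Gamma>"]
    by (simp add: nb_nob db_nob add.commute add.left_commute)
qed (auto intro: dBotL dIdP dAndL dAndR dOrL dOrR1 dOrR2 dPImpL dImpR dAndImpL dOrImpL dImpImpL)

lemma hd_G: "hg n G C \<Longrightarrow> G4iSLt G C"
proof (induction rule: hg.induct)
  case (hBoxImpL n B A \<Gamma> C)
  have "G4iSLt (nb \<Gamma> + boxms (db \<Gamma>) + {#Imp (Box A) B#}) C"
    apply (rule BoxImpL[OF nob_nb])
    using hBoxImpL by (simp_all add: split_nb_db add.commute add.left_commute)
  then show ?case by (simp add: split_nb_db)
next
  case (hSLtR n A \<Gamma>)
  have "G4iSLt (nb \<Gamma> + boxms (db \<Gamma>)) (Box A)"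
    apply (rule SLtR[OF nob_nb])
    using hSLtR by (simp_all add: add.commute add.left_commute)
  then show ?case by (simp add: split_nb_db)
qed (auto intro: G4iSLt.intros)

lemma G_iff: "G4iSLt G C \<longleftrightarrow> dv G C"
  using G_dv hd_G by (auto simp: dv_def)




lemma ms_neq: "add_mset a M = add_mset b N \<Longrightarrow> a \<noteq> b \<Longrightarrow> \<exists>K. M = add_mset b K \<and> N = add_mset a K"
  by (auto simp: add_eq_conv_ex)

lemma ub_cases: "(is_boxed X \<Longrightarrow> P) \<Longrightarrow> (\<not> is_boxed X \<Longrightarrow> P) \<Longrightarrow> P" by blast

lemma wk: "hg n G C \<Longrightarrow> hg n (add_mset X G) C"
proof (induction n G C arbitrary: X rule: hg.induct)
  case (hBotL n \<Gamma> C) then show ?case by (metis add_mset_commute hg.hBotL)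
next case (hIdP n p \<Gamma>) then show ?case by (metis add_mset_commute hg.hIdP)
next case (hAndL n A B \<Gamma> C) then show ?case by (metis add_mset_commute hg.hAndL)
next case (hAndR n \<Gamma> A B) then show ?case by (metis hg.hAndR)
next case (hOrL n A \<Gamma> C B) then show ?case by (metis add_mset_commute hg.hOrL)
next case (hOrR1 n \<Gamma> A B) then show ?case by (metis hg.hOrR1)
next case (hOrR2 n \<Gamma> B A) then show ?case by (metis hg.hOrR2)
next case (hPImpL n p A \<Gamma> C) then show ?case by (metis add_mset_commute hg.hPImpL)
next case (hImpR n A \<Gamma> B) then show ?case by (metis add_mset_commute hg.hImpR)
next case (hBoxImpL n B A \<Gamma> C)
  have 1: "hg n (add_mset B (add_mset (Box A) (nb (add_mset X \<Gamma>) + db (add_mset X \<Gamma>)))) A"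
    using hBoxImpL.IH(1)[of "unbx X"] hBoxImpL.IH(1)[of X]
    by (cases "is_boxed X") (simp_all add: add_mset_commute)
  have 2: "hg n (add_mset B (add_mset X \<Gamma>)) C" using hBoxImpL.IH(2)[of X] by (simp add: add_mset_commute)
  show ?case using hg.hBoxImpL[OF 1 2] by (simp add: add_mset_commute)
next case (hSLtR n A \<Gamma>)
  have 1: "hg n (add_mset (Box A) (nb (add_mset X \<Gamma>) + db (add_mset X \<Gamma>))) A"
    using hSLtR.IH[of "unbx X"] hSLtR.IH[of X]
    by (cases "is_boxed X") (simp_all add: add_mset_commute)
  show ?case using hg.hSLtR[OF 1] .
next case (hAndImpL n A B C \<Gamma> D) then show ?case by (metis add_mset_commute hg.hAndImpL)
next case (hOrImpL n A C B \<Gamma> D) then show ?case by (metis add_mset_commute hg.hOrImpL)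
next case (hImpImpL n B C \<Gamma> A D) then show ?case by (metis add_mset_commute hg.hImpImpL)
qed

lemma wk_ms: "hg n G C \<Longrightarrow> hg n (M + G) C"
  by (induction M) (auto intro: wk)

lemma dwk: "dv G C \<Longrightarrow> dv (add_mset X G) C" by (auto simp: dv_def intro: wk)
lemma dwk_ms: "dv G C \<Longrightarrow> dv (M + G) C" by (auto simp: dv_def intro: wk_ms)

lemma ub_gen: "hg n S C \<Longrightarrow> S = add_mset (Box X) G \<Longrightarrow> hg n (add_mset X G) C"
proof (induction n S C arbitrary: G X rule: hg.induct)
  case (hBotL n \<Gamma> C)
  then obtain K where K: "\<Gamma> = add_mset (Box X) K" "G = add_mset Bot K" using ms_neq[OF hBotL.prems] by auto
  have "hg n (add_mset Bot (add_mset X K)) C" by (rule hg.hBotL)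
  then show ?case using K by (simp add: add_mset_commute)
next case (hIdP n p \<Gamma>)
  then obtain K where K: "\<Gamma> = add_mset (Box X) K" "G = add_mset (Var p) K" using ms_neq[OF hIdP.prems] by auto
  have "hg n (add_mset (Var p) (add_mset X K)) (Var p)" by (rule hg.hIdP)
  then show ?case using K by (simp add: add_mset_commute)
next case (hAndL n A B \<Gamma> C)
  then obtain K where K: "\<Gamma> = add_mset (Box X) K" "G = add_mset (And A B) K" using ms_neq[OF hAndL.prems] by auto
  have "hg n (add_mset X (add_mset A (add_mset B K))) C" using hAndL.IH[of X "add_mset A (add_mset B K)"] K
    by (simp add: add_mset_commute)
  then have "hg (Suc n) (add_mset (And A B) (add_mset X K)) C" by (intro hg.hAndL) (simp add: add_mset_commute)
  then show ?case using K by (simp add: add_mset_commute)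
next case (hAndR n \<Gamma> A B) then show ?case by (metis hg.hAndR)
next case (hOrL n A \<Gamma> C B)
  then obtain K where K: "\<Gamma> = add_mset (Box X) K" "G = add_mset (Or A B) K" using ms_neq[OF hOrL.prems] by auto
  have "hg n (add_mset X (add_mset A K)) C" using hOrL.IH(1)[of X "add_mset A K"] K
    by (simp add: add_mset_commute)
  moreover have "hg n (add_mset X (add_mset B K)) C" using hOrL.IH(2)[of X "add_mset B K"] K
    by (simp add: add_mset_commute)
  ultimately have "hg (Suc n) (add_mset (Or A B) (add_mset X K)) C" by (intro hg.hOrL) (simp_all add: add_mset_commute)
  then show ?case using K by (simp add: add_mset_commute)
next case (hOrR1 n \<Gamma> A B) then show ?case by (metis hg.hOrR1)
next case (hOrR2 n \<Gamma> B A) then show ?case by (metis hg.hOrR2)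
next case (hPImpL n p A \<Gamma> C)
  obtain K1 where K1: "add_mset (Imp (Var p) A) \<Gamma> = add_mset (Box X) K1" "G = add_mset (Var p) K1"
    using ms_neq[OF hPImpL.prems] by auto
  obtain K where K: "\<Gamma> = add_mset (Box X) K" "K1 = add_mset (Imp (Var p) A) K"
    using ms_neq[OF K1(1)] by auto
  have "hg n (add_mset X (add_mset (Var p) (add_mset A K))) C" using hPImpL.IH[of X "add_mset (Var p) (add_mset A K)"] K
    by (simp add: add_mset_commute)
  then have "hg (Suc n) (add_mset (Var p) (add_mset (Imp (Var p) A) (add_mset X K))) C"
    by (intro hg.hPImpL) (simp add: add_mset_commute)
  then show ?case using K K1 by (simp add: add_mset_commute)
next case (hImpR n A \<Gamma> B)
  have "hg n (add_mset X (add_mset A G)) B" using hImpR.IH[of X "add_mset A G"] hImpR.prems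
    by (simp add: add_mset_commute)
  then show ?case by (intro hg.hImpR) (simp add: add_mset_commute)
next case (hBoxImpL n B A \<Gamma> C)
  then obtain K where K: "\<Gamma> = add_mset (Box X) K" "G = add_mset (Imp (Box A) B) K" using ms_neq[OF hBoxImpL.prems] by auto
  have 1: "hg n (add_mset B (add_mset (Box A) (nb (add_mset X K) + db (add_mset X K)))) A"
  proof (cases "is_boxed X")
    case True then obtain Y where Y: "X = Box Y" by (auto simp: is_boxed_def)
    show ?thesis using hBoxImpL.IH(1)[of Y "add_mset B (add_mset (Box A) (nb K + db K))"] K Y
      by (simp add: add_mset_commute)
  next
    case False then show ?thesis using hBoxImpL.hyps(1) K by (simp add: add_mset_commute)
  qed
  have 2: "hg n (add_mset B (add_mset X K)) C" using hBoxImpL.IH(2)[of X "add_mset B K"] K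
    by (simp add: add_mset_commute)
  show ?case using hg.hBoxImpL[OF 1 2] K by (simp add: add_mset_commute)
next case (hSLtR n A \<Gamma>)
  have 1: "hg n (add_mset (Box A) (nb (add_mset X G) + db (add_mset X G))) A"
  proof (cases "is_boxed X")
    case True then obtain Y where Y: "X = Box Y" by (auto simp: is_boxed_def)
    show ?thesis using hSLtR.IH[of Y "add_mset (Box A) (nb G + db G)"] hSLtR.prems Y
      by (simp add: add_mset_commute)
  next
    case False then show ?thesis using hSLtR.hyps(1) hSLtR.prems by (simp add: add_mset_commute)
  qed
  show ?case using hg.hSLtR[OF 1] .
next case (hAndImpL n A B C \<Gamma> D)
  then obtain K where K: "\<Gamma> = add_mset (Box X) K" "G = add_mset (Imp (And A B) C) K" using ms_neq[OF hAndImpL.prems] by auto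
  have "hg n (add_mset X (add_mset (Imp A (Imp B C)) K)) D" using hAndImpL.IH[of X "add_mset (Imp A (Imp B C)) K"] K
    by (simp add: add_mset_commute)
  then have "hg (Suc n) (add_mset (Imp (And A B) C) (add_mset X K)) D" by (intro hg.hAndImpL) (simp add: add_mset_commute)
  then show ?case using K by (simp add: add_mset_commute)
next case (hOrImpL n A C B \<Gamma> D)
  then obtain K where K: "\<Gamma> = add_mset (Box X) K" "G = add_mset (Imp (Or A B) C) K" using ms_neq[OF hOrImpL.prems] by auto
  have "hg n (add_mset X (add_mset (Imp A C) (add_mset (Imp B C) K))) D" using hOrImpL.IH[of X "add_mset (Imp A C) (add_mset (Imp B C) K)"] K
    by (simp add: add_mset_commute)
  then have "hg (Suc n) (add_mset (Imp (Or A B) C) (add_mset X K)) D" by (intro hg.hOrImpL) (simp add: add_mset_commute)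
  then show ?case using K by (simp add: add_mset_commute)
next case (hImpImpL n B C \<Gamma> A D)
  then obtain K where K: "\<Gamma> = add_mset (Box X) K" "G = add_mset (Imp (Imp A B) C) K" using ms_neq[OF hImpImpL.prems] by auto
  have "hg n (add_mset X (add_mset (Imp B C) K)) (Imp A B)" using hImpImpL.IH(1)[of X "add_mset (Imp B C) K"] K
    by (simp add: add_mset_commute)
  moreover have "hg n (add_mset X (add_mset C K)) D" using hImpImpL.IH(2)[of X "add_mset C K"] K
    by (simp add: add_mset_commute)
  ultimately have "hg (Suc n) (add_mset (Imp (Imp A B) C) (add_mset X K)) D" by (intro hg.hImpImpL) (simp_all add: add_mset_commute)
  then show ?case using K by (simp add: add_mset_commute)
qed

lemma ub: "hg n (add_mset (Box X) G) C \<Longrightarrow> hg n (add_mset X G) C"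
  using ub_gen by blast

lemma ub_ms: "hg n (boxms M + G) C \<Longrightarrow> hg n (M + G) C"
proof (induction M arbitrary: G)
  case (add x M)
  then have "hg n (boxms M + add_mset (Box x) G) C" by simp
  then have "hg n (M + add_mset (Box x) G) C" using add.IH by blast
  then have "hg n (add_mset (Box x) (M + G)) C" by simp
  then show ?case using ub by simp
qed simp

lemma fixc: "hg n (K + M + G) C \<Longrightarrow> hg n (K + nb M + db M + G) C"
proof -
  assume "hg n (K + M + G) C"
  then have "hg n (boxms (db M) + (K + nb M + G)) C"
    using split_nb_db[of M] by (metis add.commute add.left_commute)
  then have "hg n (db M + (K + nb M + G)) C" by (rule ub_ms)
  then show ?thesis by (simp add: add.commute add.left_commute)
qed




lemma fixc': "hg n (M + G) C \<Longrightarrow> hg n (nb M + db M + G) C"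
  using fixc[of n "{#}" M G C] by simp

lemma ms_split: "add_mset a M = add_mset b N \<Longrightarrow> (a = b \<Longrightarrow> M = N \<Longrightarrow> P) \<Longrightarrow>
   (\<And>K. a \<noteq> b \<Longrightarrow> M = add_mset b K \<Longrightarrow> N = add_mset a K \<Longrightarrow> P) \<Longrightarrow> P"
  by (metis add_eq_conv_ex)

definition IHn :: "(form \<Rightarrow> form multiset \<Rightarrow> bool) \<Rightarrow> nat \<Rightarrow> bool" where
  "IHn R n \<longleftrightarrow> (\<forall>S C F M G. hg n S C \<longrightarrow> R F M \<longrightarrow> S = add_mset F G \<longrightarrow> hg n (M + G) C)"

lemma gen_left:
  fixes R :: "form \<Rightarrow> form multiset \<Rightarrow> bool"
  assumes nbR: "\<And>F M. R F M \<Longrightarrow> \<not> is_boxed F \<and> F \<noteq> Bot \<and> (\<forall>p. F \<noteq> Var p)"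
  and pAndL: "\<And>n A B G C M. R (And A B) M \<Longrightarrow> hg n (add_mset A (add_mset B G)) C \<Longrightarrow> IHn R n \<Longrightarrow> hg (Suc n) (M + G) C"
  and pOrL: "\<And>n A B G C M. R (Or A B) M \<Longrightarrow> hg n (add_mset A G) C \<Longrightarrow> hg n (add_mset B G) C \<Longrightarrow> IHn R n \<Longrightarrow> hg (Suc n) (M + G) C"
  and pPImpL: "\<And>n p A G C M. R (Imp (Var p) A) M \<Longrightarrow> hg n (add_mset (Var p) (add_mset A G)) C \<Longrightarrow> IHn R n \<Longrightarrow> hg (Suc n) (M + add_mset (Var p) G) C"
  and pBoxImpL: "\<And>n A B G C M. R (Imp (Box A) B) M \<Longrightarrow> hg n (add_mset B (add_mset (Box A) (nb G + db G))) A \<Longrightarrow>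
            hg n (add_mset B G) C \<Longrightarrow> IHn R n \<Longrightarrow> hg (Suc n) (M + G) C"
  and pAndImpL: "\<And>n A B C G D M. R (Imp (And A B) C) M \<Longrightarrow> hg n (add_mset (Imp A (Imp B C)) G) D \<Longrightarrow> IHn R n \<Longrightarrow> hg (Suc n) (M + G) D"
  and pOrImpL: "\<And>n A B C G D M. R (Imp (Or A B) C) M \<Longrightarrow> hg n (add_mset (Imp A C) (add_mset (Imp B C) G)) D \<Longrightarrow> IHn R n \<Longrightarrow> hg (Suc n) (M + G) D"
  and pImpImpL: "\<And>n A B C G D M. R (Imp (Imp A B) C) M \<Longrightarrow> hg n (add_mset (Imp B C) G) (Imp A B) \<Longrightarrow>
            hg n (add_mset C G) D \<Longrightarrow> IHn R n \<Longrightarrow> hg (Suc n) (M + G) D"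
  shows "IHn R n"
proof (induction n)
  case 0
  show ?case unfolding IHn_def
  proof (intro allI impI)
    fix S C F M G assume h: "hg 0 S C" "R F M" "S = add_mset F G"
    from h(1) show "hg 0 (M + G) C"
    proof (cases rule: hg.cases)
      case (hBotL \<Gamma>)
      then obtain K where "G = add_mset Bot K" using h(3) nbR[OF h(2)] by (metis ms_split)
      then show ?thesis by (simp add: hg.hBotL)
    next
      case (hIdP p \<Gamma>)
      then obtain K where "G = add_mset (Var p) K" using h(3) nbR[OF h(2)] by (metis ms_split)
      then show ?thesis using hIdP by (simp add: hg.hIdP)
    qed
  qed
next
  case (Suc n)
  note IH = Suc.IH[unfolded IHn_def, rule_format]
  show ?case unfolding IHn_def
  proof (intro allI impI)
    fix S C F M G assume h: "hg (Suc n) S C" "R F M" "S = add_mset F G"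
    note nbF = nbR[OF h(2)]
    have IH': "\<And>C G. hg n (add_mset F G) C \<Longrightarrow> hg n (M + G) C" using IH h(2) by blast
    from h(1) show "hg (Suc n) (M + G) C"
    proof (cases rule: hg.cases)
      case (hBotL \<Gamma>)
      then obtain K where "G = add_mset Bot K" using h(3) nbR[OF h(2)] by (metis ms_split)
      then show ?thesis by (simp add: hg.hBotL)
    next
      case (hIdP p \<Gamma>)
      then obtain K where "G = add_mset (Var p) K" using h(3) nbR[OF h(2)] by (metis ms_split)
      then show ?thesis using hIdP by (simp add: hg.hIdP)
    next
      case (hAndL A B \<Gamma>)
      have e: "add_mset (And A B) \<Gamma> = add_mset F G" using hAndL(1) h(3) by simp
      show ?thesis using e
      proof (rule ms_split)
        assume "And A B = F" "\<Gamma> = G"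
        then show ?thesis using pAndL hAndL h(2) Suc.IH by blast
      next
        fix K assume K: "\<Gamma> = add_mset F K" "G = add_mset (And A B) K"
        have "hg n (M + add_mset A (add_mset B K)) C"
          by (rule IH') (use hAndL(2) K in \<open>simp add: add_mset_commute\<close>)
        then have "hg (Suc n) (add_mset (And A B) (M + K)) C" by (intro hg.hAndL) simp
        then show ?thesis using K by simp
      qed
    next
      case (hAndR A B)
      have "hg n (M + G) A" "hg n (M + G) B" using IH' hAndR h(3) by auto
      then show ?thesis using hAndR by (simp add: hg.hAndR)
    next
      case (hOrL A \<Gamma> B)
      have e: "add_mset (Or A B) \<Gamma> = add_mset F G" using hOrL(1) h(3) by simp
      show ?thesis using e
      proof (rule ms_split)
        assume "Or A B = F" "\<Gamma> = G"
        then show ?thesis using pOrL hOrL h(2) Suc.IH by blast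
      next
        fix K assume K: "\<Gamma> = add_mset F K" "G = add_mset (Or A B) K"
        have "hg n (M + add_mset A K) C" "hg n (M + add_mset B K) C"
          by (rule IH', use hOrL K in \<open>simp add: add_mset_commute\<close>)+
        then have "hg (Suc n) (add_mset (Or A B) (M + K)) C" by (intro hg.hOrL) simp_all
        then show ?thesis using K by simp
      qed
    next
      case (hOrR1 A B)
      have "hg n (M + G) A" using IH' hOrR1 h(3) by auto
      then show ?thesis using hOrR1 by (simp add: hg.hOrR1)
    next
      case (hOrR2 B A)
      have "hg n (M + G) B" using IH' hOrR2 h(3) by auto
      then show ?thesis using hOrR2 by (simp add: hg.hOrR2)
    next
      case (hImpR A B)
      have "hg n (M + add_mset A G) B" by (rule IH') (use hImpR h(3) in \<open>simp add: add_mset_commute\<close>)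
      then have "hg (Suc n) (M + G) (Imp A B)" by (intro hg.hImpR) simp
      then show ?thesis using hImpR by simp
    next
      case (hSLtR A)
      have "hg n (M + add_mset (Box A) (nb G + db G)) A"
        by (rule IH') (use hSLtR h(3) nbF in \<open>simp add: add_mset_commute\<close>)
      then have "hg n (nb M + db M + add_mset (Box A) (nb G + db G)) A" by (rule fixc')
      then have "hg n (add_mset (Box A) (nb (M + G) + db (M + G))) A" by (simp add: ac_simps)
      then show ?thesis using hSLtR by (simp add: hg.hSLtR)
    next
      case (hPImpL p A \<Gamma>)
      have e: "add_mset (Var p) (add_mset (Imp (Var p) A) \<Gamma>) = add_mset F G" using hPImpL(1) h(3) by simp
      show ?thesis using e
      proof (rule ms_split)
        assume "Var p = F" then show ?thesis using nbF by auto
      next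
        fix K1 assume K1: "add_mset (Imp (Var p) A) \<Gamma> = add_mset F K1" "G = add_mset (Var p) K1"
        show ?thesis using K1(1)
        proof (rule ms_split)
          assume "Imp (Var p) A = F" "\<Gamma> = K1"
          then show ?thesis using pPImpL[of p A M n K1 C] hPImpL h(2) Suc.IH K1 by blast
        next
          fix K assume K: "\<Gamma> = add_mset F K" "K1 = add_mset (Imp (Var p) A) K"
          have "hg n (M + add_mset (Var p) (add_mset A K)) C"
            by (rule IH') (use hPImpL K in \<open>simp add: add_mset_commute\<close>)
          then have "hg (Suc n) (add_mset (Var p) (add_mset (Imp (Var p) A) (M + K))) C" by (intro hg.hPImpL) simp
          then show ?thesis using K K1 by simp
        qed
      qed
    next
      case (hBoxImpL B A \<Gamma>)
      have e: "add_mset (Imp (Box A) B) \<Gamma> = add_mset F G" using hBoxImpL(1) h(3) by simp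
      show ?thesis using e
      proof (rule ms_split)
        assume "Imp (Box A) B = F" "\<Gamma> = G"
        then show ?thesis using pBoxImpL hBoxImpL h(2) Suc.IH by blast
      next
        fix K assume K: "\<Gamma> = add_mset F K" "G = add_mset (Imp (Box A) B) K"
        have "hg n (M + add_mset B (add_mset (Box A) (nb K + db K))) A"
          by (rule IH') (use hBoxImpL K nbF in \<open>simp add: add_mset_commute\<close>)
        then have "hg n (nb M + db M + add_mset B (add_mset (Box A) (nb K + db K))) A" by (rule fixc')
        then have 1: "hg n (add_mset B (add_mset (Box A) (nb (M + K) + db (M + K)))) A" by (simp add: ac_simps)
        have "hg n (M + add_mset B K) C"
          by (rule IH') (use hBoxImpL K in \<open>simp add: add_mset_commute\<close>)
        then have 2: "hg n (add_mset B (M + K)) C" by simp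
        have "hg (Suc n) (add_mset (Imp (Box A) B) (M + K)) C" by (rule hg.hBoxImpL[OF 1 2])
        then show ?thesis using K by simp
      qed
    next
      case (hAndImpL A B C' \<Gamma>)
      have e: "add_mset (Imp (And A B) C') \<Gamma> = add_mset F G" using hAndImpL(1) h(3) by simp
      show ?thesis using e
      proof (rule ms_split)
        assume "Imp (And A B) C' = F" "\<Gamma> = G"
        then show ?thesis using pAndImpL hAndImpL h(2) Suc.IH by blast
      next
        fix K assume K: "\<Gamma> = add_mset F K" "G = add_mset (Imp (And A B) C') K"
        have "hg n (M + add_mset (Imp A (Imp B C')) K) C"
          by (rule IH') (use hAndImpL K in \<open>simp add: add_mset_commute\<close>)
        then have "hg (Suc n) (add_mset (Imp (And A B) C') (M + K)) C" by (intro hg.hAndImpL) simp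
        then show ?thesis using K by simp
      qed
    next
      case (hOrImpL A C' B \<Gamma>)
      have e: "add_mset (Imp (Or A B) C') \<Gamma> = add_mset F G" using hOrImpL(1) h(3) by simp
      show ?thesis using e
      proof (rule ms_split)
        assume "Imp (Or A B) C' = F" "\<Gamma> = G"
        then show ?thesis using pOrImpL hOrImpL h(2) Suc.IH by blast
      next
        fix K assume K: "\<Gamma> = add_mset F K" "G = add_mset (Imp (Or A B) C') K"
        have "hg n (M + add_mset (Imp A C') (add_mset (Imp B C') K)) C"
          by (rule IH') (use hOrImpL K in \<open>simp add: add_mset_commute\<close>)
        then have "hg (Suc n) (add_mset (Imp (Or A B) C') (M + K)) C" by (intro hg.hOrImpL) simp
        then show ?thesis using K by simp
      qed
    next
      case (hImpImpL B C' \<Gamma> A)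
      have e: "add_mset (Imp (Imp A B) C') \<Gamma> = add_mset F G" using hImpImpL(1) h(3) by simp
      show ?thesis using e
      proof (rule ms_split)
        assume "Imp (Imp A B) C' = F" "\<Gamma> = G"
        then show ?thesis using pImpImpL hImpImpL h(2) Suc.IH by blast
      next
        fix K assume K: "\<Gamma> = add_mset F K" "G = add_mset (Imp (Imp A B) C') K"
        have "hg n (M + add_mset (Imp B C') K) (Imp A B)" "hg n (M + add_mset C' K) C"
          by (rule IH', use hImpImpL K in \<open>simp add: add_mset_commute\<close>)+
        then have "hg (Suc n) (add_mset (Imp (Imp A B) C') (M + K)) C" by (intro hg.hImpImpL) simp_all
        then show ?thesis using K by simp
      qed
    qed
  qed
qed




lemma use_IHn: "IHn R n \<Longrightarrow> hg n (add_mset F G) C \<Longrightarrow> R F M \<Longrightarrow> hg n (M + G) C"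
  unfolding IHn_def by blast

lemma mono1: "hg n G C \<Longrightarrow> hg (Suc n) G C" using hg_mono by (meson le_SucI order_refl)

definition RAnd where "RAnd F M \<longleftrightarrow> (\<exists>X Y. F = And X Y \<and> M = {#X, Y#})"
lemma invAnd: "hg n (add_mset (And X Y) G) C \<Longrightarrow> hg n (add_mset X (add_mset Y G)) C"
proof -
  have "IHn RAnd n"
    by (rule gen_left) (auto simp: RAnd_def intro: mono1)
  moreover assume "hg n (add_mset (And X Y) G) C"
  ultimately show ?thesis using use_IHn[of RAnd n "And X Y" G C "{#X, Y#}"] by (simp add: RAnd_def)
qed

definition ROr where "ROr F M \<longleftrightarrow> (\<exists>X Y. F = Or X Y \<and> (M = {#X#} \<or> M = {#Y#}))"
lemma invOr: "hg n (add_mset (Or X Y) G) C \<Longrightarrow> hg n (add_mset X G) C \<and> hg n (add_mset Y G) C"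
proof -
  have "IHn ROr n"
    by (rule gen_left) (auto simp: ROr_def intro: mono1)
  moreover assume "hg n (add_mset (Or X Y) G) C"
  ultimately show ?thesis using use_IHn[of ROr n "Or X Y" G C "{#X#}"] use_IHn[of ROr n "Or X Y" G C "{#Y#}"]
    by (simp add: ROr_def)
qed

definition RAndImp where "RAndImp F M \<longleftrightarrow> (\<exists>X Y Z. F = Imp (And X Y) Z \<and> M = {#Imp X (Imp Y Z)#})"
lemma invAndImp: "hg n (add_mset (Imp (And X Y) Z) G) C \<Longrightarrow> hg n (add_mset (Imp X (Imp Y Z)) G) C"
proof -
  have "IHn RAndImp n"
    by (rule gen_left) (auto simp: RAndImp_def intro: mono1)
  moreover assume "hg n (add_mset (Imp (And X Y) Z) G) C"
  ultimately show ?thesis using use_IHn[of RAndImp n "Imp (And X Y) Z" G C] by (simp add: RAndImp_def)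
qed

definition ROrImp where "ROrImp F M \<longleftrightarrow> (\<exists>X Y Z. F = Imp (Or X Y) Z \<and> M = {#Imp X Z, Imp Y Z#})"
lemma invOrImp: "hg n (add_mset (Imp (Or X Y) Z) G) C \<Longrightarrow> hg n (add_mset (Imp X Z) (add_mset (Imp Y Z) G)) C"
proof -
  have "IHn ROrImp n"
    by (rule gen_left) (auto simp: ROrImp_def intro: mono1)
  moreover assume "hg n (add_mset (Imp (Or X Y) Z) G) C"
  ultimately show ?thesis using use_IHn[of ROrImp n "Imp (Or X Y) Z" G C] by (simp add: ROrImp_def)
qed

definition simpAnt :: "form \<Rightarrow> bool" where
  "simpAnt X \<longleftrightarrow> (\<forall>A B. X \<noteq> And A B \<and> X \<noteq> Or A B)"

definition RImpS where "RImpS F M \<longleftrightarrow> (\<exists>X Y. F = Imp X Y \<and> simpAnt X \<and> M = {#Y#})"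
lemma invImpS: "hg n (add_mset (Imp X Y) G) C \<Longrightarrow> simpAnt X \<Longrightarrow> hg n (add_mset Y G) C"
proof -
  have "IHn RImpS n"
  proof (rule gen_left)
    fix n p A G C M assume "RImpS (Imp (Var p) A) M" "hg n (add_mset (Var p) (add_mset A G)) C"
    then show "hg (Suc n) (M + add_mset (Var p) G) C" by (auto simp: RImpS_def add_mset_commute intro: mono1)
  qed (auto simp: RImpS_def simpAnt_def intro: mono1)
  moreover assume "hg n (add_mset (Imp X Y) G) C" "simpAnt X"
  ultimately show ?thesis using use_IHn[of RImpS n "Imp X Y" G C] by (simp add: RImpS_def)
qed

lemma simpAnt_simps[simp]: "simpAnt (Var p)" "simpAnt (Box A)" "simpAnt (Imp A B)" "simpAnt Bot"
  by (auto simp: simpAnt_def)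




definition IHr :: "(form \<Rightarrow> form \<Rightarrow> form multiset \<Rightarrow> bool) \<Rightarrow> nat \<Rightarrow> bool" where
  "IHr RR n \<longleftrightarrow> (\<forall>S C C' M. hg n S C \<longrightarrow> RR C C' M \<longrightarrow> hg n (M + S) C')"

lemma gen_right:
  assumes ex: "\<And>C C' M. RR C C' M \<Longrightarrow> (\<forall>p. C \<noteq> Var p) \<and> (\<forall>A. C \<noteq> Box A) \<and> (\<forall>A B. C \<noteq> Or A B)"
  and pAndR: "\<And>n S A B C' M. RR (And A B) C' M \<Longrightarrow> hg n S A \<Longrightarrow> hg n S B \<Longrightarrow> hg (Suc n) (M + S) C'"
  and pImpR: "\<And>n S A B C' M. RR (Imp A B) C' M \<Longrightarrow> hg n (add_mset A S) B \<Longrightarrow> hg (Suc n) (M + S) C'"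
  shows "IHr RR n"
  unfolding IHr_def
proof (intro allI impI)
  fix S C C' M assume "hg n S C" "RR C C' M"
  then show "hg n (M + S) C'"
  proof (induction n S C arbitrary: C' M rule: hg.induct)
    case (hBotL n \<Gamma> C)
    then show ?case using hg.hBotL[of n "M + \<Gamma>" C'] by simp
  next
    case (hIdP n p \<Gamma>) then show ?case using ex by blast
  next
    case (hAndL n A B \<Gamma> C)
    have "hg n (M + add_mset A (add_mset B \<Gamma>)) C'" using hAndL by blast
    then have "hg (Suc n) (add_mset (And A B) (M + \<Gamma>)) C'" by (intro hg.hAndL) simp
    then show ?case by simp
  next
    case (hAndR n \<Gamma> A B) then show ?case using pAndR by blast
  next
    case (hOrL n A \<Gamma> C B)
    have "hg n (M + add_mset A \<Gamma>) C'" "hg n (M + add_mset B \<Gamma>) C'" using hOrL by blast+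
    then have "hg (Suc n) (add_mset (Or A B) (M + \<Gamma>)) C'" by (intro hg.hOrL) simp_all
    then show ?case by simp
  next
    case (hOrR1 n \<Gamma> A B) then show ?case using ex by blast
  next
    case (hOrR2 n \<Gamma> B A) then show ?case using ex by blast
  next
    case (hPImpL n p A \<Gamma> C)
    have "hg n (M + add_mset (Var p) (add_mset A \<Gamma>)) C'" using hPImpL by blast
    then have "hg (Suc n) (add_mset (Var p) (add_mset (Imp (Var p) A) (M + \<Gamma>))) C'" by (intro hg.hPImpL) simp
    then show ?case by simp
  next
    case (hImpR n A \<Gamma> B) then show ?case using pImpR by blast
  next
    case (hBoxImpL n B A \<Gamma> C)
    have "hg n ((nb M + db M) + add_mset B (add_mset (Box A) (nb \<Gamma> + db \<Gamma>))) A"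
      using hBoxImpL(1) by (rule wk_ms)
    then have 1: "hg n (add_mset B (add_mset (Box A) (nb (M + \<Gamma>) + db (M + \<Gamma>)))) A" by (simp add: ac_simps)
    have "hg n (M + add_mset B \<Gamma>) C'" using hBoxImpL by blast
    then have 2: "hg n (add_mset B (M + \<Gamma>)) C'" by simp
    show ?case using hg.hBoxImpL[OF 1 2] by simp
  next
    case (hSLtR n A \<Gamma>) then show ?case using ex by blast
  next
    case (hAndImpL n A B C \<Gamma> D)
    have "hg n (M + add_mset (Imp A (Imp B C)) \<Gamma>) C'" using hAndImpL by blast
    then have "hg (Suc n) (add_mset (Imp (And A B) C) (M + \<Gamma>)) C'" by (intro hg.hAndImpL) simp
    then show ?case by simp
  next
    case (hOrImpL n A C B \<Gamma> D)
    have "hg n (M + add_mset (Imp A C) (add_mset (Imp B C) \<Gamma>)) C'" using hOrImpL by blast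
    then have "hg (Suc n) (add_mset (Imp (Or A B) C) (M + \<Gamma>)) C'" by (intro hg.hOrImpL) simp
    then show ?case by simp
  next
    case (hImpImpL n B C \<Gamma> A D)
    have 1: "hg n (M + add_mset (Imp B C) \<Gamma>) (Imp A B)" using hImpImpL(1) by (rule wk_ms)
    have "hg n (M + add_mset C \<Gamma>) C'" using hImpImpL by blast
    then have "hg (Suc n) (add_mset (Imp (Imp A B) C) (M + \<Gamma>)) C'" using 1 by (intro hg.hImpImpL) simp_all
    then show ?case by simp
  qed
qed

definition RImpR where "RImpR C C' M \<longleftrightarrow> (\<exists>X. C = Imp X C' \<and> M = {#X#})"
lemma invImpR: "hg n G (Imp X Y) \<Longrightarrow> hg n (add_mset X G) Y"
proof -
  have "IHr RImpR n"
    by (rule gen_right) (auto simp: RImpR_def intro: mono1)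
  moreover assume "hg n G (Imp X Y)"
  ultimately show ?thesis unfolding IHr_def RImpR_def by force
qed

definition RAndR where "RAndR C C' M \<longleftrightarrow> (\<exists>X Y. C = And X Y \<and> (C' = X \<or> C' = Y) \<and> M = {#})"
lemma invAndR: "hg n G (And X Y) \<Longrightarrow> hg n G X \<and> hg n G Y"
proof -
  have "IHr RAndR n"
    by (rule gen_right) (auto simp: RAndR_def intro: mono1)
  moreover assume "hg n G (And X Y)"
  ultimately show ?thesis unfolding IHr_def RAndR_def by force
qed




lemma dfixc': "dv (M + G) C \<Longrightarrow> dv (nb M + db M + G) C"
  unfolding dv_def using fixc' by blast

definition IHd :: "(form \<Rightarrow> form multiset \<Rightarrow> bool) \<Rightarrow> nat \<Rightarrow> bool" where
  "IHd R n \<longleftrightarrow> (\<forall>S C F M G. hg n S C \<longrightarrow> R F M \<longrightarrow> S = add_mset F G \<longrightarrow> dv (M + G) C)"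

lemma gen_left_dv:
  fixes R :: "form \<Rightarrow> form multiset \<Rightarrow> bool"
  assumes nbR: "\<And>F M. R F M \<Longrightarrow> \<not> is_boxed F \<and> F \<noteq> Bot \<and> (\<forall>p. F \<noteq> Var p)"
  and pAndL: "\<And>n A B G C M. R (And A B) M \<Longrightarrow> hg n (add_mset A (add_mset B G)) C \<Longrightarrow> dv (M + G) C"
  and pOrL: "\<And>n A B G C M. R (Or A B) M \<Longrightarrow> hg n (add_mset A G) C \<Longrightarrow> hg n (add_mset B G) C \<Longrightarrow> dv (M + G) C"
  and pPImpL: "\<And>n p A G C M. R (Imp (Var p) A) M \<Longrightarrow> hg n (add_mset (Var p) (add_mset A G)) C \<Longrightarrow> dv (M + add_mset (Var p) G) C"
  and pBoxImpL: "\<And>n A B G C M. R (Imp (Box A) B) M \<Longrightarrow> hg n (add_mset B (add_mset (Box A) (nb G + db G))) A \<Longrightarrow>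
            hg n (add_mset B G) C \<Longrightarrow> dv (M + G) C"
  and pAndImpL: "\<And>n A B C G D M. R (Imp (And A B) C) M \<Longrightarrow> hg n (add_mset (Imp A (Imp B C)) G) D \<Longrightarrow> dv (M + G) D"
  and pOrImpL: "\<And>n A B C G D M. R (Imp (Or A B) C) M \<Longrightarrow> hg n (add_mset (Imp A C) (add_mset (Imp B C) G)) D \<Longrightarrow> dv (M + G) D"
  and pImpImpL: "\<And>n A B C G D M. R (Imp (Imp A B) C) M \<Longrightarrow> hg n (add_mset (Imp B C) G) (Imp A B) \<Longrightarrow>
            hg n (add_mset C G) D \<Longrightarrow> dv (M + G) D"
  shows "IHd R n"
proof (induction n)
  case 0
  show ?case unfolding IHd_def
  proof (intro allI impI)
    fix S C F M G assume h: "hg 0 S C" "R F M" "S = add_mset F G"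
    from h(1) show "dv (M + G) C"
    proof (cases rule: hg.cases)
      case (hBotL \<Gamma>)
      then obtain K where "G = add_mset Bot K" using h(3) nbR[OF h(2)] by (metis ms_split)
      then show ?thesis by (simp add: dBotL)
    next
      case (hIdP p \<Gamma>)
      then obtain K where "G = add_mset (Var p) K" using h(3) nbR[OF h(2)] by (metis ms_split)
      then show ?thesis using hIdP by (simp add: dIdP)
    qed
  qed
next
  case (Suc n)
  note IH = Suc.IH[unfolded IHd_def, rule_format]
  show ?case unfolding IHd_def
  proof (intro allI impI)
    fix S C F M G assume h: "hg (Suc n) S C" "R F M" "S = add_mset F G"
    note nbF = nbR[OF h(2)]
    have IH': "\<And>C G. hg n (add_mset F G) C \<Longrightarrow> dv (M + G) C" using IH h(2) by blast
    from h(1) show "dv (M + G) C"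
    proof (cases rule: hg.cases)
      case (hBotL \<Gamma>)
      then obtain K where "G = add_mset Bot K" using h(3) nbR[OF h(2)] by (metis ms_split)
      then show ?thesis by (simp add: dBotL)
    next
      case (hIdP p \<Gamma>)
      then obtain K where "G = add_mset (Var p) K" using h(3) nbR[OF h(2)] by (metis ms_split)
      then show ?thesis using hIdP by (simp add: dIdP)
    next
      case (hAndL A B \<Gamma>)
      have e: "add_mset (And A B) \<Gamma> = add_mset F G" using hAndL(1) h(3) by simp
      show ?thesis using e
      proof (rule ms_split)
        assume "And A B = F" "\<Gamma> = G"
        then show ?thesis using pAndL hAndL h(2) by blast
      next
        fix K assume K: "\<Gamma> = add_mset F K" "G = add_mset (And A B) K"
        have "dv (M + add_mset A (add_mset B K)) C"
          by (rule IH') (use hAndL(2) K in \<open>simp add: add_mset_commute\<close>)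
        then have "dv (add_mset (And A B) (M + K)) C" by (intro dAndL) simp
        then show ?thesis using K by simp
      qed
    next
      case (hAndR A B)
      have "dv (M + G) A" "dv (M + G) B" using IH' hAndR h(3) by auto
      then show ?thesis using hAndR by (simp add: dAndR)
    next
      case (hOrL A \<Gamma> B)
      have e: "add_mset (Or A B) \<Gamma> = add_mset F G" using hOrL(1) h(3) by simp
      show ?thesis using e
      proof (rule ms_split)
        assume "Or A B = F" "\<Gamma> = G"
        then show ?thesis using pOrL hOrL h(2) by blast
      next
        fix K assume K: "\<Gamma> = add_mset F K" "G = add_mset (Or A B) K"
        have "dv (M + add_mset A K) C" "dv (M + add_mset B K) C"
          by (rule IH', use hOrL K in \<open>simp add: add_mset_commute\<close>)+
        then have "dv (add_mset (Or A B) (M + K)) C" by (intro dOrL) simp_all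
        then show ?thesis using K by simp
      qed
    next
      case (hOrR1 A B)
      have "dv (M + G) A" using IH' hOrR1 h(3) by auto
      then show ?thesis using hOrR1 by (simp add: dOrR1)
    next
      case (hOrR2 B A)
      have "dv (M + G) B" using IH' hOrR2 h(3) by auto
      then show ?thesis using hOrR2 by (simp add: dOrR2)
    next
      case (hImpR A B)
      have "dv (M + add_mset A G) B" by (rule IH') (use hImpR h(3) in \<open>simp add: add_mset_commute\<close>)
      then have "dv (M + G) (Imp A B)" by (intro dImpR) simp
      then show ?thesis using hImpR by simp
    next
      case (hSLtR A)
      have "dv (M + add_mset (Box A) (nb G + db G)) A"
        by (rule IH') (use hSLtR h(3) nbF in \<open>simp add: add_mset_commute\<close>)
      then have "dv (nb M + db M + add_mset (Box A) (nb G + db G)) A" by (rule dfixc')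
      then have "dv (add_mset (Box A) (nb (M + G) + db (M + G))) A" by (simp add: ac_simps)
      then show ?thesis using hSLtR by (simp add: dSLtR)
    next
      case (hPImpL p A \<Gamma>)
      have e: "add_mset (Var p) (add_mset (Imp (Var p) A) \<Gamma>) = add_mset F G" using hPImpL(1) h(3) by simp
      show ?thesis using e
      proof (rule ms_split)
        assume "Var p = F" then show ?thesis using nbF by auto
      next
        fix K1 assume K1: "add_mset (Imp (Var p) A) \<Gamma> = add_mset F K1" "G = add_mset (Var p) K1"
        show ?thesis using K1(1)
        proof (rule ms_split)
          assume "Imp (Var p) A = F" "\<Gamma> = K1"
          then show ?thesis using pPImpL[of p A M n K1 C] hPImpL h(2) K1 by blast
        next
          fix K assume K: "\<Gamma> = add_mset F K" "K1 = add_mset (Imp (Var p) A) K"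
          have "dv (M + add_mset (Var p) (add_mset A K)) C"
            by (rule IH') (use hPImpL K in \<open>simp add: add_mset_commute\<close>)
          then have "dv (add_mset (Var p) (add_mset (Imp (Var p) A) (M + K))) C" by (intro dPImpL) simp
          then show ?thesis using K K1 by simp
        qed
      qed
    next
      case (hBoxImpL B A \<Gamma>)
      have e: "add_mset (Imp (Box A) B) \<Gamma> = add_mset F G" using hBoxImpL(1) h(3) by simp
      show ?thesis using e
      proof (rule ms_split)
        assume "Imp (Box A) B = F" "\<Gamma> = G"
        then show ?thesis using pBoxImpL hBoxImpL h(2) by blast
      next
        fix K assume K: "\<Gamma> = add_mset F K" "G = add_mset (Imp (Box A) B) K"
        have "dv (M + add_mset B (add_mset (Box A) (nb K + db K))) A"
          by (rule IH') (use hBoxImpL K nbF in \<open>simp add: add_mset_commute\<close>)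
        then have "dv (nb M + db M + add_mset B (add_mset (Box A) (nb K + db K))) A" by (rule dfixc')
        then have 1: "dv (add_mset B (add_mset (Box A) (nb (M + K) + db (M + K)))) A" by (simp add: ac_simps)
        have "dv (M + add_mset B K) C"
          by (rule IH') (use hBoxImpL K in \<open>simp add: add_mset_commute\<close>)
        then have 2: "dv (add_mset B (M + K)) C" by simp
        have "dv (add_mset (Imp (Box A) B) (M + K)) C" by (rule dBoxImpL[OF 1 2])
        then show ?thesis using K by simp
      qed
    next
      case (hAndImpL A B C' \<Gamma>)
      have e: "add_mset (Imp (And A B) C') \<Gamma> = add_mset F G" using hAndImpL(1) h(3) by simp
      show ?thesis using e
      proof (rule ms_split)
        assume "Imp (And A B) C' = F" "\<Gamma> = G"
        then show ?thesis using pAndImpL hAndImpL h(2) by blast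
      next
        fix K assume K: "\<Gamma> = add_mset F K" "G = add_mset (Imp (And A B) C') K"
        have "dv (M + add_mset (Imp A (Imp B C')) K) C"
          by (rule IH') (use hAndImpL K in \<open>simp add: add_mset_commute\<close>)
        then have "dv (add_mset (Imp (And A B) C') (M + K)) C" by (intro dAndImpL) simp
        then show ?thesis using K by simp
      qed
    next
      case (hOrImpL A C' B \<Gamma>)
      have e: "add_mset (Imp (Or A B) C') \<Gamma> = add_mset F G" using hOrImpL(1) h(3) by simp
      show ?thesis using e
      proof (rule ms_split)
        assume "Imp (Or A B) C' = F" "\<Gamma> = G"
        then show ?thesis using pOrImpL hOrImpL h(2) by blast
      next
        fix K assume K: "\<Gamma> = add_mset F K" "G = add_mset (Imp (Or A B) C') K"
        have "dv (M + add_mset (Imp A C') (add_mset (Imp B C') K)) C"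
          by (rule IH') (use hOrImpL K in \<open>simp add: add_mset_commute\<close>)
        then have "dv (add_mset (Imp (Or A B) C') (M + K)) C" by (intro dOrImpL) simp
        then show ?thesis using K by simp
      qed
    next
      case (hImpImpL B C' \<Gamma> A)
      have e: "add_mset (Imp (Imp A B) C') \<Gamma> = add_mset F G" using hImpImpL(1) h(3) by simp
      show ?thesis using e
      proof (rule ms_split)
        assume "Imp (Imp A B) C' = F" "\<Gamma> = G"
        then show ?thesis using pImpImpL hImpImpL h(2) by blast
      next
        fix K assume K: "\<Gamma> = add_mset F K" "G = add_mset (Imp (Imp A B) C') K"
        have "dv (M + add_mset (Imp B C') K) (Imp A B)" "dv (M + add_mset C' K) C"
          by (rule IH', use hImpImpL K in \<open>simp add: add_mset_commute\<close>)+
        then have "dv (add_mset (Imp (Imp A B) C') (M + K)) C" by (intro dImpImpL) simp_all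
        then show ?thesis using K by simp
      qed
    qed
  qed
qed





fun wt :: "form \<Rightarrow> nat" where
  "wt (Var p) = 1" | "wt Bot = 1" | "wt (And a b) = wt a + wt b + 2"
| "wt (Or a b) = wt a + wt b + 1" | "wt (Imp a b) = wt a + wt b + 1" | "wt (Box a) = wt a + 1"

lemma wt_pos: "wt A > 0" by (cases A) auto

definition CTR where "CTR A \<longleftrightarrow> (\<forall>G C. dv (add_mset A (add_mset A G)) C \<longrightarrow> dv (add_mset A G) C)"
definition IMPI where "IMPI X Y \<longleftrightarrow> (\<forall>G C. dv (add_mset (Imp X Y) G) C \<longrightarrow> dv (add_mset Y G) C)"
definition LL where "LL C D B \<longleftrightarrow> (\<forall>G E. dv (add_mset (Imp (Imp C D) B) G) E \<longrightarrow> dv (add_mset C (add_mset (Imp D B) G)) E)"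
definition MP where "MP D B \<longleftrightarrow> (\<forall>G E. dv (add_mset (Imp D B) G) D \<longrightarrow> dv (add_mset B G) E \<longrightarrow> dv (add_mset (Imp D B) G) E)"

lemma dinvAnd: "dv (add_mset (And X Y) G) C \<Longrightarrow> dv (add_mset X (add_mset Y G)) C"
  unfolding dv_def using invAnd by blast
lemma dinvOr: "dv (add_mset (Or X Y) G) C \<Longrightarrow> dv (add_mset X G) C \<and> dv (add_mset Y G) C"
  unfolding dv_def using invOr by blast
lemma dinvAndImp: "dv (add_mset (Imp (And X Y) Z) G) C \<Longrightarrow> dv (add_mset (Imp X (Imp Y Z)) G) C"
  unfolding dv_def using invAndImp by blast
lemma dinvOrImp: "dv (add_mset (Imp (Or X Y) Z) G) C \<Longrightarrow> dv (add_mset (Imp X Z) (add_mset (Imp Y Z) G)) C"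
  unfolding dv_def using invOrImp by blast
lemma dinvImpS: "dv (add_mset (Imp X Y) G) C \<Longrightarrow> simpAnt X \<Longrightarrow> dv (add_mset Y G) C"
  unfolding dv_def using invImpS by blast
lemma dinvImpR: "dv G (Imp X Y) \<Longrightarrow> dv (add_mset X G) Y"
  unfolding dv_def using invImpR by blast
lemma dinvAndR: "dv G (And X Y) \<Longrightarrow> dv G X \<and> dv G Y"
  unfolding dv_def using invAndR by blast

lemma useIHd: "IHd R n \<Longrightarrow> hg n (add_mset F G) C \<Longrightarrow> R F M \<Longrightarrow> dv (M + G) C"
  unfolding IHd_def by blast

lemma IMPI_step:
  assumes ctr: "\<And>A. wt A < wt (Imp X Y) \<Longrightarrow> CTR A"
  and imp: "\<And>X' Y'. wt (Imp X' Y') < wt (Imp X Y) \<Longrightarrow> IMPI X' Y'"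
  shows "IMPI X Y"
proof -
  define R where "R F M \<longleftrightarrow> F = Imp X Y \<and> M = {#Y#}" for F M
  have "IHd R n" for n
  proof (rule gen_left_dv)
    fix n p A G C M assume "R (Imp (Var p) A) M" "hg n (add_mset (Var p) (add_mset A G)) C"
    then show "dv (M + add_mset (Var p) G) C" by (auto simp: R_def add_mset_commute intro: hd_dv)
  next
    fix n A B G C M assume "R (Imp (Box A) B) M" "hg n (add_mset B G) C"
    then show "dv (M + G) C" by (auto simp: R_def intro: hd_dv)
  next
    fix n A B C G D M assume r: "R (Imp (And A B) C) M" and h: "hg n (add_mset (Imp A (Imp B C)) G) D"
    then have e: "X = And A B" "Y = C" "M = {#C#}" by (auto simp: R_def)
    have "IMPI A (Imp B C)" by (rule imp) (simp add: e)
    then have "dv (add_mset (Imp B C) G) D" using hd_dv[OF h] by (simp add: IMPI_def)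
    moreover have "IMPI B C" by (rule imp) (simp add: e)
    ultimately show "dv (M + G) D" using e by (simp add: IMPI_def)
  next
    fix n A B C G D M assume r: "R (Imp (Or A B) C) M" and h: "hg n (add_mset (Imp A C) (add_mset (Imp B C) G)) D"
    then have e: "X = Or A B" "Y = C" "M = {#C#}" by (auto simp: R_def)
    have "IMPI A C" by (rule imp) (simp add: e)
    then have "dv (add_mset C (add_mset (Imp B C) G)) D" using hd_dv[OF h] by (simp add: IMPI_def)
    then have "dv (add_mset (Imp B C) (add_mset C G)) D" by (simp add: add_mset_commute)
    moreover have "IMPI B C" by (rule imp) (simp add: e)
    ultimately have "dv (add_mset C (add_mset C G)) D" by (simp add: IMPI_def)
    moreover have "CTR C" by (rule ctr) (simp add: e)
    ultimately show "dv (M + G) D" using e by (simp add: CTR_def)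
  next
    fix n A B C G D M assume "R (Imp (Imp A B) C) M" "hg n (add_mset C G) D"
    then show "dv (M + G) D" by (auto simp: R_def intro: hd_dv)
  qed (auto simp: R_def)
  show ?thesis unfolding IMPI_def
  proof (intro allI impI)
    fix G C assume "dv (add_mset (Imp X Y) G) C"
    then obtain n where "hg n (add_mset (Imp X Y) G) C" by (auto simp: dv_def)
    then show "dv (add_mset Y G) C" using useIHd[OF \<open>IHd R n\<close>, of "Imp X Y" G C "{#Y#}"] by (simp add: R_def)
  qed
qed

lemma LL_step:
  assumes mp: "\<And>D' B'. wt (Imp D' B') < wt (Imp (Imp C D) B) \<Longrightarrow> MP D' B'"
  shows "LL C D B"
proof -
  define R where "R F M \<longleftrightarrow> F = Imp (Imp C D) B \<and> M = {#C, Imp D B#}" for F M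
  have "IHd R n" for n
  proof (rule gen_left_dv)
    fix n A B' C' G D' M assume r: "R (Imp (Imp A B') C') M" and h1: "hg n (add_mset (Imp B' C') G) (Imp A B')"
      and h2: "hg n (add_mset C' G) D'"
    then have e: "A = C" "B' = D" "C' = B" "M = {#C, Imp D B#}" by (auto simp: R_def)
    have "dv (add_mset (Imp D B) (add_mset C G)) D" using dinvImpR[OF hd_dv[OF h1]] e by (simp add: add_mset_commute)
    moreover have "dv (add_mset B (add_mset C G)) D'" using dwk[OF hd_dv[OF h2], of C] e by (simp add: add_mset_commute)
    moreover have "MP D B" by (rule mp) simp
    ultimately have "dv (add_mset (Imp D B) (add_mset C G)) D'" by (simp add: MP_def)
    then show "dv (M + G) D'" using e by (simp add: add_mset_commute)
  qed (auto simp: R_def)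
  show ?thesis unfolding LL_def
  proof (intro allI impI)
    fix G E assume "dv (add_mset (Imp (Imp C D) B) G) E"
    then obtain n where "hg n (add_mset (Imp (Imp C D) B) G) E" by (auto simp: dv_def)
    then show "dv (add_mset C (add_mset (Imp D B) G)) E"
      using useIHd[OF \<open>IHd R n\<close>, of "Imp (Imp C D) B" G E "{#C, Imp D B#}"] by (simp add: R_def)
  qed
qed




lemma ms_split2: "add_mset a M = add_mset b N \<Longrightarrow> a \<noteq> b \<Longrightarrow> (\<And>K. M = add_mset b K \<Longrightarrow> N = add_mset a K \<Longrightarrow> P) \<Longrightarrow> P"
  by (metis add_eq_conv_ex)

lemma MP_step:
  assumes ll: "\<And>D1 D2. D = Imp D1 D2 \<Longrightarrow> LL D1 D2 B"
  and ctr: "\<And>A. wt A < wt (Imp D B) \<Longrightarrow> CTR A"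
  and mp: "\<And>D' B'. wt (Imp D' B') < wt (Imp D B) \<Longrightarrow> MP D' B'"
  and imp: "\<And>X Y. wt (Imp X Y) < wt (Imp D B) \<Longrightarrow> IMPI X Y"
  shows "MP D B"
proof -
  have main: "\<forall>G E. hg n (add_mset (Imp D B) G) D \<longrightarrow> dv (add_mset B G) E \<longrightarrow> dv (add_mset (Imp D B) G) E" for n
  proof (induction n rule: less_induct)
    case (less n)
    have IH: "\<And>m G' E'. m < n \<Longrightarrow> hg m (add_mset (Imp D B) G') D \<Longrightarrow> dv (add_mset B G') E' \<Longrightarrow> dv (add_mset (Imp D B) G') E'"
      using less.IH by blast
    show ?case
    proof (intro allI impI)
      fix G E assume h1: "hg n (add_mset (Imp D B) G) D" and h2: "dv (add_mset B G) E"
      from h1 show "dv (add_mset (Imp D B) G) E"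
      proof (cases rule: hg.cases)
        case (hBotL \<Gamma>)
        then obtain K where "G = add_mset Bot K" using ms_neq[OF hBotL(1)] by auto
        then show ?thesis using dBotL[of "add_mset (Imp D B) K" E] by (simp add: add_mset_commute)
      next
        case (hIdP p \<Gamma>)
        then have eD: "D = Var p" by simp
        from hIdP obtain K where K: "G = add_mset (Var p) K" using ms_neq[OF hIdP(1)] by auto
        have "dv (add_mset (Var p) (add_mset B K)) E" using h2 K by (simp add: add_mset_commute)
        then have "dv (add_mset (Var p) (add_mset (Imp (Var p) B) K)) E" by (rule dPImpL)
        then show ?thesis using K eD by (simp add: add_mset_commute)
      next
        case (hAndL m A A' \<Gamma>)
        then obtain K where K: "G = add_mset (And A A') K" "\<Gamma> = add_mset (Imp D B) K" using ms_neq[OF hAndL(2)] by auto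
        have "dv (add_mset (Imp D B) (add_mset A (add_mset A' K))) E"
        proof (rule IH[of m])
          show "m < n" using hAndL by simp
          show "hg m (add_mset (Imp D B) (add_mset A (add_mset A' K))) D" using hAndL K by (simp add: add_mset_commute)
          show "dv (add_mset B (add_mset A (add_mset A' K))) E"
            using dinvAnd[of A A' "add_mset B K" E] h2 K by (simp add: add_mset_commute)
        qed
        then have "dv (add_mset (And A A') (add_mset (Imp D B) K)) E" by (intro dAndL) (simp add: add_mset_commute)
        then show ?thesis using K by (simp add: add_mset_commute)
      next
        case (hOrL m A \<Gamma> A')
        then obtain K where K: "G = add_mset (Or A A') K" "\<Gamma> = add_mset (Imp D B) K" using ms_neq[OF hOrL(2)] by auto
        have i: "dv (add_mset A (add_mset B K)) E" "dv (add_mset A' (add_mset B K)) E"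
          using dinvOr[of A A' "add_mset B K" E] h2 K by (simp_all add: add_mset_commute)
        have "dv (add_mset (Imp D B) (add_mset A K)) E"
          by (rule IH[of m]) (use hOrL K i in \<open>simp_all add: add_mset_commute\<close>)
        moreover have "dv (add_mset (Imp D B) (add_mset A' K)) E"
          by (rule IH[of m]) (use hOrL K i in \<open>simp_all add: add_mset_commute\<close>)
        ultimately have "dv (add_mset (Or A A') (add_mset (Imp D B) K)) E" by (intro dOrL) (simp_all add: add_mset_commute)
        then show ?thesis using K by (simp add: add_mset_commute)
      next
        case (hAndR m A A')
        then have eD: "D = And A A'" by simp
        have p1: "hg m (add_mset (Imp (And A A') B) G) A" "hg m (add_mset (Imp (And A A') B) G) A'"
          using hAndR eD by simp_all
        have q1: "dv (add_mset (Imp A (Imp A' B)) G) A" using invAndImp[OF p1(1)] hd_dv by blast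
        have q2: "dv (add_mset (Imp A (Imp A' B)) G) A'" using invAndImp[OF p1(2)] hd_dv by blast
        have "IMPI A (Imp A' B)" by (rule imp) (simp add: eD)
        then have q3: "dv (add_mset (Imp A' B) G) A'" using q2 by (simp add: IMPI_def)
        have "MP A' B" by (rule mp) (simp add: eD)
        then have q4: "dv (add_mset (Imp A' B) G) E" using q3 h2 by (simp add: MP_def)
        have "MP A (Imp A' B)" by (rule mp) (simp add: eD)
        then have "dv (add_mset (Imp A (Imp A' B)) G) E" using q1 q4 by (simp add: MP_def)
        then show ?thesis using eD by (simp add: dAndImpL)
      next
        case (hOrR1 m A A')
        then have eD: "D = Or A A'" by simp
        have "hg m (add_mset (Imp A B) (add_mset (Imp A' B) G)) A"
          using invOrImp[of m A A' B G A] hOrR1 eD by simp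
        moreover have "dv (add_mset B (add_mset (Imp A' B) G)) E" using dwk[OF h2, of "Imp A' B"] by (simp add: add_mset_commute)
        moreover have "MP A B" by (rule mp) (simp add: eD)
        ultimately have "dv (add_mset (Imp A B) (add_mset (Imp A' B) G)) E" by (simp add: MP_def hd_dv)
        then show ?thesis using eD by (simp add: dOrImpL)
      next
        case (hOrR2 m A' A)
        then have eD: "D = Or A A'" by simp
        have "hg m (add_mset (Imp A' B) (add_mset (Imp A B) G)) A'"
          using invOrImp[of m A A' B G A'] hOrR2 eD by (simp add: add_mset_commute)
        moreover have "dv (add_mset B (add_mset (Imp A B) G)) E" using dwk[OF h2, of "Imp A B"] by (simp add: add_mset_commute)
        moreover have "MP A' B" by (rule mp) (simp add: eD)
        ultimately have "dv (add_mset (Imp A' B) (add_mset (Imp A B) G)) E" by (simp add: MP_def hd_dv)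
        then show ?thesis using eD by (simp add: dOrImpL add_mset_commute)
      next
        case (hPImpL m p A \<Gamma>)
        then obtain K1 where K1: "G = add_mset (Var p) K1" "add_mset (Imp (Var p) A) \<Gamma> = add_mset (Imp D B) K1"
          using ms_neq[OF hPImpL(2)] by auto
        show ?thesis
        proof (cases "Imp D B = Imp (Var p) A")
          case True
          then have "\<Gamma> = K1" using K1 by simp
          have "dv (add_mset (Var p) (add_mset B K1)) E" using h2 K1 by (simp add: add_mset_commute)
          then have "dv (add_mset (Var p) (add_mset (Imp (Var p) B) K1)) E" by (rule dPImpL)
          then show ?thesis using K1 True by (simp add: add_mset_commute)
        next
          case False
          then obtain K where K: "\<Gamma> = add_mset (Imp D B) K" "K1 = add_mset (Imp (Var p) A) K"
            using ms_neq[OF K1(2)[symmetric]] False by auto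
          have "dv (add_mset (Imp D B) (add_mset (Var p) (add_mset A K))) E"
          proof (rule IH[of m])
            show "m < n" using hPImpL by simp
            show "hg m (add_mset (Imp D B) (add_mset (Var p) (add_mset A K))) D" using hPImpL K by (simp add: add_mset_commute)
            show "dv (add_mset B (add_mset (Var p) (add_mset A K))) E"
              using dinvImpS[of "Var p" A "add_mset B (add_mset (Var p) K)" E] h2 K K1 by (simp add: add_mset_commute)
          qed
          then have "dv (add_mset (Var p) (add_mset (Imp (Var p) A) (add_mset (Imp D B) K))) E"
            by (intro dPImpL) (simp add: add_mset_commute)
          then show ?thesis using K K1 by (simp add: add_mset_commute)
        qed
      next
        case (hImpR m A A')
        then have eD: "D = Imp A A'" by simp
        have LLh: "\<And>G E. dv (add_mset (Imp (Imp A A') B) G) E \<Longrightarrow> dv (add_mset A (add_mset (Imp A' B) G)) E"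
          using ll[OF eD] unfolding LL_def by blast
        have "hg m (add_mset (Imp (Imp A A') B) (add_mset A G)) A'"
          using hImpR(3) eD by (simp add: add_mset_commute)
        then have "dv (add_mset A (add_mset (Imp A' B) (add_mset A G))) A'" by (intro LLh hd_dv)
        then have "dv (add_mset A (add_mset A (add_mset (Imp A' B) G))) A'" by (simp add: add_mset_commute)
        moreover have "CTR A" by (rule ctr) (simp add: eD)
        ultimately have "dv (add_mset A (add_mset (Imp A' B) G)) A'" by (simp add: CTR_def)
        then have "dv (add_mset (Imp A' B) G) (Imp A A')" by (rule dImpR)
        then show ?thesis using eD h2 by (simp add: dImpImpL)
      next
        case (hBoxImpL m B' A \<Gamma>)
        show ?thesis
        proof (cases "Imp D B = Imp (Box A) B'")
          case True
          then have e: "D = Box A" "B = B'" "\<Gamma> = G" using hBoxImpL by auto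
          show ?thesis using dBoxImpL[OF hd_dv h2] hBoxImpL e by simp
        next
          case False
          then obtain K where K: "G = add_mset (Imp (Box A) B') K" "\<Gamma> = add_mset (Imp D B) K"
            using ms_neq[OF hBoxImpL(2) False] by auto
          have "dv (add_mset (Imp D B) (add_mset B' K)) E"
          proof (rule IH[of m])
            show "m < n" using hBoxImpL by simp
            show "hg m (add_mset (Imp D B) (add_mset B' K)) D" using hBoxImpL K by (simp add: add_mset_commute)
            show "dv (add_mset B (add_mset B' K)) E"
              using dinvImpS[of "Box A" B' "add_mset B K" E] h2 K by (simp add: add_mset_commute)
          qed
          then have 2: "dv (add_mset B' \<Gamma>) E" using K by (simp add: add_mset_commute)
          have 1: "dv (add_mset B' (add_mset (Box A) (nb \<Gamma> + db \<Gamma>))) A" using hBoxImpL hd_dv by blast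
          show ?thesis using dBoxImpL[OF 1 2] K by (simp add: add_mset_commute)
        qed
      next
        case (hSLtR m A)
        then have eD: "D = Box A" by simp
        have "hg m (add_mset (Imp (Box A) B) (add_mset (Box A) (nb G + db G))) A"
          using hSLtR eD by (simp add: add_mset_commute)
        then have "hg m (add_mset B (add_mset (Box A) (nb G + db G))) A" by (rule invImpS) simp
        then show ?thesis using dBoxImpL[OF hd_dv h2] eD by simp
      next
        case (hAndImpL m A A' C \<Gamma>)
        show ?thesis
        proof (cases "Imp D B = Imp (And A A') C")
          case True
          then have e: "D = And A A'" "B = C" "\<Gamma> = G" using hAndImpL by auto
          have "hg m (add_mset (Imp A (Imp A' B)) G) D" using hAndImpL e by simp
          then have "hg m (add_mset (Imp D B) (add_mset (Imp A (Imp A' B)) G)) D" by (rule wk)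
          moreover have "dv (add_mset B (add_mset (Imp A (Imp A' B)) G)) E" using dwk[OF h2, of "Imp A (Imp A' B)"] by (simp add: add_mset_commute)
          moreover have "m < n" using hAndImpL by simp
          ultimately have "dv (add_mset (Imp D B) (add_mset (Imp A (Imp A' B)) G)) E" using IH by blast
          then have "dv (add_mset (Imp A (Imp A' B)) (add_mset (Imp A (Imp A' B)) G)) E" using dinvAndImp[of A A' B] e by simp
          moreover have "CTR (Imp A (Imp A' B))" by (rule ctr) (simp add: e)
          ultimately have "dv (add_mset (Imp A (Imp A' B)) G) E" by (simp add: CTR_def)
          then show ?thesis using e by (simp add: dAndImpL)
        next
          case False
          then obtain K where K: "G = add_mset (Imp (And A A') C) K" "\<Gamma> = add_mset (Imp D B) K"
            using ms_neq[OF hAndImpL(2) False] by auto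
          have "dv (add_mset (Imp D B) (add_mset (Imp A (Imp A' C)) K)) E"
          proof (rule IH[of m])
            show "m < n" using hAndImpL by simp
            show "hg m (add_mset (Imp D B) (add_mset (Imp A (Imp A' C)) K)) D" using hAndImpL K by (simp add: add_mset_commute)
            show "dv (add_mset B (add_mset (Imp A (Imp A' C)) K)) E"
              using dinvAndImp[of A A' C "add_mset B K" E] h2 K by (simp add: add_mset_commute)
          qed
          then have "dv (add_mset (Imp (And A A') C) (add_mset (Imp D B) K)) E" by (intro dAndImpL) (simp add: add_mset_commute)
          then show ?thesis using K by (simp add: add_mset_commute)
        qed
      next
        case (hOrImpL m A C A' \<Gamma>)
        show ?thesis
        proof (cases "Imp D B = Imp (Or A A') C")
          case True
          then have e: "D = Or A A'" "B = C" "\<Gamma> = G" using hOrImpL by auto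
          have "hg m (add_mset (Imp A B) (add_mset (Imp A' B) G)) D" using hOrImpL e by simp
          then have "hg m (add_mset (Imp D B) (add_mset (Imp A B) (add_mset (Imp A' B) G))) D" by (rule wk)
          moreover have "dv (add_mset B (add_mset (Imp A B) (add_mset (Imp A' B) G))) E"
            using dwk[OF dwk[OF h2, of "Imp A' B"], of "Imp A B"] by (simp add: add_mset_commute)
          moreover have "m < n" using hOrImpL by simp
          ultimately have "dv (add_mset (Imp D B) (add_mset (Imp A B) (add_mset (Imp A' B) G))) E" using IH by blast
          then have "dv (add_mset (Imp (Or A A') B) (add_mset (Imp A B) (add_mset (Imp A' B) G))) E"
            using e by simp
          then have "dv (add_mset (Imp A B) (add_mset (Imp A' B) (add_mset (Imp A B) (add_mset (Imp A' B) G)))) E"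
            by (rule dinvOrImp)
          then have "dv (add_mset (Imp A B) (add_mset (Imp A B) (add_mset (Imp A' B) (add_mset (Imp A' B) G)))) E"
            by (simp add: add_mset_commute)
          moreover have "CTR (Imp A B)" by (rule ctr) (simp add: e)
          ultimately have "dv (add_mset (Imp A B) (add_mset (Imp A' B) (add_mset (Imp A' B) G))) E" by (simp add: CTR_def)
          then have "dv (add_mset (Imp A' B) (add_mset (Imp A' B) (add_mset (Imp A B) G))) E" by (simp add: add_mset_commute)
          moreover have "CTR (Imp A' B)" by (rule ctr) (simp add: e)
          ultimately have "dv (add_mset (Imp A' B) (add_mset (Imp A B) G)) E" by (simp add: CTR_def)
          then show ?thesis using e by (simp add: dOrImpL add_mset_commute)
        next
          case False
          then obtain K where K: "G = add_mset (Imp (Or A A') C) K" "\<Gamma> = add_mset (Imp D B) K"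
            using ms_neq[OF hOrImpL(2) False] by auto
          have "dv (add_mset (Imp D B) (add_mset (Imp A C) (add_mset (Imp A' C) K))) E"
          proof (rule IH[of m])
            show "m < n" using hOrImpL by simp
            show "hg m (add_mset (Imp D B) (add_mset (Imp A C) (add_mset (Imp A' C) K))) D" using hOrImpL K by (simp add: add_mset_commute)
            show "dv (add_mset B (add_mset (Imp A C) (add_mset (Imp A' C) K))) E"
              using dinvOrImp[of A A' C "add_mset B K" E] h2 K by (simp add: add_mset_commute)
          qed
          then have "dv (add_mset (Imp (Or A A') C) (add_mset (Imp D B) K)) E" by (intro dOrImpL) (simp add: add_mset_commute)
          then show ?thesis using K by (simp add: add_mset_commute)
        qed
      next
        case (hImpImpL m A' C \<Gamma> A)
        show ?thesis
        proof (cases "Imp D B = Imp (Imp A A') C")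
          case True
          then have e: "D = Imp A A'" "B = C" "\<Gamma> = G" using hImpImpL by auto
          have "dv (add_mset (Imp A' C) G) (Imp A A')" using hImpImpL e hd_dv by blast
          then show ?thesis using dImpImpL h2 e by simp
        next
          case False
          then obtain K where K: "G = add_mset (Imp (Imp A A') C) K" "\<Gamma> = add_mset (Imp D B) K"
            using ms_neq[OF hImpImpL(2) False] by auto
          have "dv (add_mset (Imp D B) (add_mset C K)) E"
          proof (rule IH[of m])
            show "m < n" using hImpImpL by simp
            show "hg m (add_mset (Imp D B) (add_mset C K)) D" using hImpImpL K by (simp add: add_mset_commute)
            show "dv (add_mset B (add_mset C K)) E"
              using dinvImpS[of "Imp A A'" C "add_mset B K" E] h2 K by (simp add: add_mset_commute)
          qed
          then have 2: "dv (add_mset C \<Gamma>) E" using K by (simp add: add_mset_commute)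
          have 1: "dv (add_mset (Imp A' C) \<Gamma>) (Imp A A')" using hImpImpL hd_dv by blast
          show ?thesis using dImpImpL[OF 1 2] K by (simp add: add_mset_commute)
        qed
      qed
    qed
  qed
  show ?thesis unfolding MP_def
  proof (intro allI impI)
    fix G E assume a: "dv (add_mset (Imp D B) G) D" and b: "dv (add_mset B G) E"
    from a obtain n where "hg n (add_mset (Imp D B) G) D" unfolding dv_def by blast
    then show "dv (add_mset (Imp D B) G) E" using main[of n] b by blast
  qed
qed




lemma split2: "add_mset P \<Gamma> = add_mset A (add_mset A G) \<Longrightarrow> (P = A \<Longrightarrow> \<Gamma> = add_mset A G \<Longrightarrow> Q) \<Longrightarrow>
  (\<And>K. P \<noteq> A \<Longrightarrow> G = add_mset P K \<Longrightarrow> \<Gamma> = add_mset A (add_mset A K) \<Longrightarrow> Q) \<Longrightarrow> Q"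
proof -
  assume e: "add_mset P \<Gamma> = add_mset A (add_mset A G)" and c1: "P = A \<Longrightarrow> \<Gamma> = add_mset A G \<Longrightarrow> Q"
    and c2: "\<And>K. P \<noteq> A \<Longrightarrow> G = add_mset P K \<Longrightarrow> \<Gamma> = add_mset A (add_mset A K) \<Longrightarrow> Q"
  show Q
  proof (cases "P = A")
    case True then show ?thesis using c1 e by simp
  next
    case False
    obtain K1 where K1: "\<Gamma> = add_mset A K1" "add_mset A G = add_mset P K1" using ms_neq[OF e False] by auto
    obtain K where K: "G = add_mset P K" "K1 = add_mset A K" using ms_neq[OF K1(2)] False by auto
    show ?thesis using c2[OF False K(1)] K1 K by simp
  qed
qed

lemma useCTR: "CTR A \<Longrightarrow> dv (add_mset A (add_mset A G)) C \<Longrightarrow> dv (add_mset A G) C"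
  unfolding CTR_def by blast

lemma CTR_step:
  assumes ll: "\<And>X Y Z. A = Imp (Imp X Y) Z \<Longrightarrow> LL X Y Z"
  and ctr: "\<And>A'. wt A' < wt A \<Longrightarrow> CTR A'"
  shows "CTR A"
proof -
  have cX: "\<And>X G C. dv (add_mset X (add_mset X G)) C \<Longrightarrow> wt X < wt A \<Longrightarrow> dv (add_mset X G) C"
    using ctr unfolding CTR_def by blast
  have cXh: "\<And>X G C n. hg n (add_mset X (add_mset X G)) C \<Longrightarrow> wt X < wt A \<Longrightarrow> dv (add_mset X G) C"
    using cX hd_dv by blast
  have main: "hg n S C \<Longrightarrow> S = add_mset A (add_mset A G) \<Longrightarrow> dv (add_mset A G) C" for n S C G
  proof (induction n S C arbitrary: G rule: hg.induct)
    case (hBotL n \<Gamma> C)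
    show ?case using hBotL.prems
    proof (rule split2)
      assume "Bot = A" then show ?thesis using dBotL by simp
    next
      fix K assume "G = add_mset Bot K" then show ?thesis using dBotL[of "add_mset A K" C] by (simp add: add_mset_commute)
    qed
  next
    case (hIdP n p \<Gamma>)
    show ?case using hIdP.prems
    proof (rule split2)
      assume e: "Var p = A" show ?thesis using dIdP[of p G] e by simp
    next
      fix K assume "G = add_mset (Var p) K" then show ?thesis using dIdP[of p "add_mset A K"] by (simp add: add_mset_commute)
    qed
  next
    case (hAndL n X Y \<Gamma> C)
    show ?case using hAndL.prems
    proof (rule split2)
      assume e: "And X Y = A" "\<Gamma> = add_mset A G"
      have "hg n (add_mset (And X Y) (add_mset X (add_mset Y G))) C" using hAndL.hyps e(2) e(1)[symmetric] by (simp add: add_mset_commute)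
      then have "hg n (add_mset X (add_mset Y (add_mset X (add_mset Y G)))) C" by (rule invAnd)
      then have "dv (add_mset X (add_mset X (add_mset Y (add_mset Y G)))) C" by (simp add: hd_dv add_mset_commute)
      then have "dv (add_mset X (add_mset Y (add_mset Y G))) C" by (rule cX) (simp add: e[symmetric])
      then have "dv (add_mset Y (add_mset Y (add_mset X G))) C" by (simp add: add_mset_commute)
      then have "dv (add_mset Y (add_mset X G)) C" by (rule cX) (simp add: e[symmetric])
      then have "dv (add_mset (And X Y) G) C" by (intro dAndL) (simp add: add_mset_commute)
      then show ?thesis using e by simp
    next
      fix K assume K: "G = add_mset (And X Y) K" "\<Gamma> = add_mset A (add_mset A K)"
      have "dv (add_mset A (add_mset X (add_mset Y K))) C" using hAndL.IH K by (simp add: add_mset_commute)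
      then have "dv (add_mset (And X Y) (add_mset A K)) C" by (intro dAndL) (simp add: add_mset_commute)
      then show ?thesis using K by (simp add: add_mset_commute)
    qed
  next
    case (hAndR n \<Gamma> X Y) then show ?case by (simp add: dAndR)
  next
    case (hOrL n X \<Gamma> C Y)
    show ?case using hOrL.prems
    proof (rule split2)
      assume e: "Or X Y = A" "\<Gamma> = add_mset A G"
      have "hg n (add_mset (Or X Y) (add_mset X G)) C" "hg n (add_mset (Or X Y) (add_mset Y G)) C"
        using hOrL.hyps e(2) e(1)[symmetric] by (simp_all add: add_mset_commute)
      then have "hg n (add_mset X (add_mset X G)) C" "hg n (add_mset Y (add_mset Y G)) C"
        using invOr by blast+
      then have "dv (add_mset X G) C" "dv (add_mset Y G) C"
        by (auto intro!: cXh simp: e(1)[symmetric])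
      then have "dv (add_mset (Or X Y) G) C" by (rule dOrL)
      then show ?thesis using e by simp
    next
      fix K assume K: "G = add_mset (Or X Y) K" "\<Gamma> = add_mset A (add_mset A K)"
      have "dv (add_mset A (add_mset X K)) C" "dv (add_mset A (add_mset Y K)) C"
        using hOrL.IH K by (simp_all add: add_mset_commute)
      then have "dv (add_mset (Or X Y) (add_mset A K)) C" by (intro dOrL) (simp_all add: add_mset_commute)
      then show ?thesis using K by (simp add: add_mset_commute)
    qed
  next
    case (hOrR1 n \<Gamma> X Y) then show ?case by (simp add: dOrR1)
  next
    case (hOrR2 n \<Gamma> Y X) then show ?case by (simp add: dOrR2)
  next
    case (hPImpL n p X \<Gamma> C)
    have e0: "add_mset (Var p) (add_mset (Imp (Var p) X) \<Gamma>) = add_mset A (add_mset A G)" using hPImpL.prems by simp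
    show ?case using e0
    proof (rule split2)
      assume e: "Var p = A" "add_mset (Imp (Var p) X) \<Gamma> = add_mset A G"
      obtain K where K: "G = add_mset (Imp (Var p) X) K" "\<Gamma> = add_mset A K" using ms_neq[OF e(2)] e(1) by auto
      have "dv (add_mset A (add_mset X K)) C" using hPImpL.IH K e by (simp add: add_mset_commute)
      then have "dv (add_mset (Var p) (add_mset (Imp (Var p) X) K)) C" using e by (intro dPImpL) simp
      then show ?thesis using K e by simp
    next
      fix K1 assume K1: "Var p \<noteq> A" "G = add_mset (Var p) K1" "add_mset (Imp (Var p) X) \<Gamma> = add_mset A (add_mset A K1)"
      show ?thesis using K1(3)
      proof (rule split2)
        assume e: "Imp (Var p) X = A" "\<Gamma> = add_mset A K1"
        have "hg n (add_mset (Imp (Var p) X) (add_mset (Var p) (add_mset X K1))) C" using hPImpL.hyps e(2) e(1)[symmetric] by (simp add: add_mset_commute)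
        then have "hg n (add_mset X (add_mset (Var p) (add_mset X K1))) C" by (rule invImpS) simp
        then have "dv (add_mset X (add_mset X (add_mset (Var p) K1))) C" by (simp add: hd_dv add_mset_commute)
        then have "dv (add_mset X (add_mset (Var p) K1)) C" by (rule cX) (simp add: e(1)[symmetric])
        then have "dv (add_mset (Var p) (add_mset (Imp (Var p) X) K1)) C" by (intro dPImpL) (simp add: add_mset_commute)
        then show ?thesis using e K1 by (simp add: add_mset_commute)
      next
        fix K assume K: "Imp (Var p) X \<noteq> A" "K1 = add_mset (Imp (Var p) X) K" "\<Gamma> = add_mset A (add_mset A K)"
        have "dv (add_mset A (add_mset (Var p) (add_mset X K))) C" using hPImpL.IH K by (simp add: add_mset_commute)
        then have "dv (add_mset (Var p) (add_mset (Imp (Var p) X) (add_mset A K))) C" by (intro dPImpL) (simp add: add_mset_commute)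
        then show ?thesis using K K1 by (simp add: add_mset_commute)
      qed
    qed
  next
    case (hImpR n X \<Gamma> Y)
    have "dv (add_mset A (add_mset X G)) Y" using hImpR by (simp add: add_mset_commute)
    then show ?case by (intro dImpR) (simp add: add_mset_commute)
  next
    case (hBoxImpL n Y X \<Gamma> C)
    show ?case using hBoxImpL.prems
    proof (rule split2)
      assume e: "Imp (Box X) Y = A" "\<Gamma> = add_mset A G"
      have "hg n (add_mset (Imp (Box X) Y) (add_mset Y (add_mset (Box X) (nb G + db G)))) X"
        using hBoxImpL.hyps(1) e(2) e(1)[symmetric] by (simp add: add_mset_commute)
      then have "hg n (add_mset Y (add_mset Y (add_mset (Box X) (nb G + db G)))) X" by (rule invImpS) simp
      then have 1: "dv (add_mset Y (add_mset (Box X) (nb G + db G))) X"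
        by (rule cXh) (simp add: e(1)[symmetric])
      have "hg n (add_mset (Imp (Box X) Y) (add_mset Y G)) C" using hBoxImpL.hyps(2) e(2) e(1)[symmetric] by (simp add: add_mset_commute)
      then have "hg n (add_mset Y (add_mset Y G)) C" by (rule invImpS) simp
      then have 2: "dv (add_mset Y G) C" by (rule cXh) (simp add: e(1)[symmetric])
      show ?thesis using dBoxImpL[OF 1 2] e by simp
    next
      fix K assume K: "G = add_mset (Imp (Box X) Y) K" "\<Gamma> = add_mset A (add_mset A K)"
      have 2: "dv (add_mset Y (add_mset A K)) C" using hBoxImpL.IH(2) K by (simp add: add_mset_commute)
      have 1: "dv (add_mset Y (add_mset (Box X) (nb (add_mset A K) + db (add_mset A K)))) X"
      proof (cases "is_boxed A")
        case True
        then obtain A' where A': "A = Box A'" by (auto simp: is_boxed_def)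
        have "dv (add_mset A' (add_mset A' (add_mset Y (add_mset (Box X) (nb K + db K))))) X"
          using hd_dv[OF hBoxImpL.hyps(1)] K A' by (simp add: add_mset_commute)
        then have "dv (add_mset A' (add_mset Y (add_mset (Box X) (nb K + db K)))) X"
          by (rule cX) (simp add: A')
        then show ?thesis using A' by (simp add: add_mset_commute)
      next
        case False
        have "dv (add_mset A (add_mset Y (add_mset (Box X) (nb K + db K)))) X"
          using hBoxImpL.IH(1) K False by (simp add: add_mset_commute)
        then show ?thesis using False by (simp add: add_mset_commute)
      qed
      show ?thesis using dBoxImpL[OF 1 2] K by (simp add: add_mset_commute)
    qed
  next
    case (hSLtR n X \<Gamma>)
    have "dv (add_mset (Box X) (nb (add_mset A G) + db (add_mset A G))) X"
    proof (cases "is_boxed A")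
      case True
      then obtain A' where A': "A = Box A'" by (auto simp: is_boxed_def)
      have "dv (add_mset A' (add_mset A' (add_mset (Box X) (nb G + db G)))) X"
        using hd_dv[OF hSLtR.hyps] hSLtR.prems A' by (simp add: add_mset_commute)
      then have "dv (add_mset A' (add_mset (Box X) (nb G + db G))) X"
        by (rule cX) (simp add: A')
      then show ?thesis using A' by (simp add: add_mset_commute)
    next
      case False
      have "dv (add_mset A (add_mset (Box X) (nb G + db G))) X"
        using hSLtR.IH hSLtR.prems False by (simp add: add_mset_commute)
      then show ?thesis using False by (simp add: add_mset_commute)
    qed
    then show ?case by (rule dSLtR)
  next
    case (hAndImpL n X Y Z \<Gamma> D)
    show ?case using hAndImpL.prems
    proof (rule split2)
      assume e: "Imp (And X Y) Z = A" "\<Gamma> = add_mset A G"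
      have "hg n (add_mset (Imp (And X Y) Z) (add_mset (Imp X (Imp Y Z)) G)) D" using hAndImpL.hyps e(2) e(1)[symmetric] by (simp add: add_mset_commute)
      then have "hg n (add_mset (Imp X (Imp Y Z)) (add_mset (Imp X (Imp Y Z)) G)) D" by (rule invAndImp)
      then have "dv (add_mset (Imp X (Imp Y Z)) G) D" by (rule cXh) (simp add: e(1)[symmetric])
      then show ?thesis using e dAndImpL by auto
    next
      fix K assume K: "G = add_mset (Imp (And X Y) Z) K" "\<Gamma> = add_mset A (add_mset A K)"
      have "dv (add_mset A (add_mset (Imp X (Imp Y Z)) K)) D" using hAndImpL.IH K by (simp add: add_mset_commute)
      then have "dv (add_mset (Imp (And X Y) Z) (add_mset A K)) D" by (intro dAndImpL) (simp add: add_mset_commute)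
      then show ?thesis using K by (simp add: add_mset_commute)
    qed
  next
    case (hOrImpL n X Z Y \<Gamma> D)
    show ?case using hOrImpL.prems
    proof (rule split2)
      assume e: "Imp (Or X Y) Z = A" "\<Gamma> = add_mset A G"
      have "hg n (add_mset (Imp (Or X Y) Z) (add_mset (Imp X Z) (add_mset (Imp Y Z) G))) D" using hOrImpL.hyps e(2) e(1)[symmetric] by (simp add: add_mset_commute)
      then have "hg n (add_mset (Imp X Z) (add_mset (Imp Y Z) (add_mset (Imp X Z) (add_mset (Imp Y Z) G)))) D" by (rule invOrImp)
      then have "dv (add_mset (Imp X Z) (add_mset (Imp X Z) (add_mset (Imp Y Z) (add_mset (Imp Y Z) G)))) D" by (simp add: hd_dv add_mset_commute)
      then have "dv (add_mset (Imp X Z) (add_mset (Imp Y Z) (add_mset (Imp Y Z) G))) D" by (rule cX) (simp add: e(1)[symmetric])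
      then have "dv (add_mset (Imp Y Z) (add_mset (Imp Y Z) (add_mset (Imp X Z) G))) D" by (simp add: add_mset_commute)
      then have "dv (add_mset (Imp Y Z) (add_mset (Imp X Z) G)) D" by (rule cX) (simp add: e(1)[symmetric])
      then have "dv (add_mset (Imp (Or X Y) Z) G) D" by (intro dOrImpL) (simp add: add_mset_commute)
      then show ?thesis using e by simp
    next
      fix K assume K: "G = add_mset (Imp (Or X Y) Z) K" "\<Gamma> = add_mset A (add_mset A K)"
      have "dv (add_mset A (add_mset (Imp X Z) (add_mset (Imp Y Z) K))) D" using hOrImpL.IH K by (simp add: add_mset_commute)
      then have "dv (add_mset (Imp (Or X Y) Z) (add_mset A K)) D" by (intro dOrImpL) (simp add: add_mset_commute)
      then show ?thesis using K by (simp add: add_mset_commute)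
    qed
  next
    case (hImpImpL n Y Z \<Gamma> X D)
    show ?case using hImpImpL.prems
    proof (rule split2)
      assume e: "Imp (Imp X Y) Z = A" "\<Gamma> = add_mset A G"
      have "hg n (add_mset (Imp (Imp X Y) Z) (add_mset Z G)) D" using hImpImpL.hyps(2) e(2) e(1)[symmetric] by (simp add: add_mset_commute)
      then have "hg n (add_mset Z (add_mset Z G)) D" by (rule invImpS) simp
      then have 2: "dv (add_mset Z G) D" by (rule cXh) (simp add: e(1)[symmetric])
      have LLh: "\<And>G E. dv (add_mset (Imp (Imp X Y) Z) G) E \<Longrightarrow> dv (add_mset X (add_mset (Imp Y Z) G)) E"
        using ll[OF e(1)[symmetric]] unfolding LL_def by blast
      have "hg n (add_mset (Imp (Imp X Y) Z) (add_mset (Imp Y Z) G)) (Imp X Y)"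
        using hImpImpL.hyps(1) e(2) e(1)[symmetric] by (simp add: add_mset_commute)
      then have "dv (add_mset X (add_mset (Imp Y Z) (add_mset (Imp Y Z) G))) (Imp X Y)" by (intro LLh hd_dv)
      then have "dv (add_mset X (add_mset X (add_mset (Imp Y Z) (add_mset (Imp Y Z) G)))) Y" by (rule dinvImpR)
      then have "dv (add_mset X (add_mset (Imp Y Z) (add_mset (Imp Y Z) G))) Y" by (rule cX) (simp add: e(1)[symmetric])
      then have "dv (add_mset (Imp Y Z) (add_mset (Imp Y Z) (add_mset X G))) Y" by (simp add: add_mset_commute)
      then have "dv (add_mset (Imp Y Z) (add_mset X G)) Y" by (rule cX) (simp add: e(1)[symmetric])
      then have "dv (add_mset X (add_mset (Imp Y Z) G)) Y" by (simp add: add_mset_commute)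
      then have 1: "dv (add_mset (Imp Y Z) G) (Imp X Y)" by (rule dImpR)
      show ?thesis using dImpImpL[OF 1 2] e by simp
    next
      fix K assume K: "G = add_mset (Imp (Imp X Y) Z) K" "\<Gamma> = add_mset A (add_mset A K)"
      have "dv (add_mset A (add_mset (Imp Y Z) K)) (Imp X Y)" "dv (add_mset A (add_mset Z K)) D"
        using hImpImpL.IH K by (simp_all add: add_mset_commute)
      then have "dv (add_mset (Imp (Imp X Y) Z) (add_mset A K)) D" by (intro dImpImpL) (simp_all add: add_mset_commute)
      then show ?thesis using K by (simp add: add_mset_commute)
    qed
  qed
  show ?thesis unfolding CTR_def
  proof (intro allI impI)
    fix G C assume "dv (add_mset A (add_mset A G)) C"
    then obtain n where "hg n (add_mset A (add_mset A G)) C" unfolding dv_def by blast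
    then show "dv (add_mset A G) C" using main by blast
  qed
qed




lemma all_levels:
  "(\<forall>X Y. wt (Imp X Y) = m \<longrightarrow> IMPI X Y) \<and> (\<forall>C D B. wt (Imp (Imp C D) B) = m \<longrightarrow> LL C D B)
   \<and> (\<forall>D B. wt (Imp D B) = m \<longrightarrow> MP D B) \<and> (\<forall>A. wt A = m \<longrightarrow> CTR A)"
proof (induction m rule: less_induct)
  case (less m)
  have ctrL: "\<And>A. wt A < m \<Longrightarrow> CTR A" using less by blast
  have impL: "\<And>X Y. wt (Imp X Y) < m \<Longrightarrow> IMPI X Y" using less by blast
  have mpL: "\<And>D B. wt (Imp D B) < m \<Longrightarrow> MP D B" using less by blast
  have I: "\<forall>X Y. wt (Imp X Y) = m \<longrightarrow> IMPI X Y"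
    using IMPI_step ctrL impL by metis
  have L: "\<forall>C D B. wt (Imp (Imp C D) B) = m \<longrightarrow> LL C D B"
    using LL_step mpL by metis
  have M: "\<forall>D B. wt (Imp D B) = m \<longrightarrow> MP D B"
  proof (intro allI impI)
    fix D B assume w: "wt (Imp D B) = m"
    show "MP D B"
    proof (rule MP_step)
      fix D1 D2 assume "D = Imp D1 D2" then show "LL D1 D2 B" using L w by auto
    qed (use w ctrL mpL impL in auto)
  qed
  have C: "\<forall>A. wt A = m \<longrightarrow> CTR A"
  proof (intro allI impI)
    fix A assume w: "wt A = m"
    show "CTR A"
    proof (rule CTR_step)
      fix X Y Z assume "A = Imp (Imp X Y) Z" then show "LL X Y Z" using L w by auto
    qed (use w ctrL in auto)
  qed
  show ?case using I L M C by blast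
qed

theorem mainTheorem13:
  fixes \<Gamma> :: "form multiset" and A C :: form
  assumes "G4iSLt (add_mset A (add_mset A \<Gamma>)) C"
  shows "G4iSLt (add_mset A \<Gamma>) C"
proof -
  have "CTR A" using all_levels by blast
  then show ?thesis using assms by (simp add: G_iff CTR_def)
qed


end
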